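(* Let $S'\in\mathcal{L_D}$. A join-semilattice $S$ is equimorphic to $S'$ (as join-semilattices) if and only if there exist two chains $C_1=(X_1,\leq_1)$, $C_2=(X_2,\leq_2)$ and a one-to-one join-preserving map of $S$ into $C_1\times C_2$ whose image $T$ satisfies: (1) the first projection $A_1$ of $T$ has order type $\omega$; (2) the second projection $A_2$ of $T$ is not order-scattered; (3) the set $(\{x\}\times A_2)\cap T$ is finite for every $x\in A_1$.
   Context: A bichain is $B=(X,\leq_1,\leq_2)$ with $\leq_1,\leq_2$ linear orders on $X$; $C(B)$ is the closure system on $X$ whose closed sets are the sets $I_1\cap I_2$ with $I_k$ an initial segment of $(X,\leq_k)$, and $K(C(B))$ is the join-semilattice of its compact elements (closures of finite sets). $\mathcal{L_D}$ is the class of join-semilattices isomorphic to $K(C(B))$ for a bichain $B$ with $(X,\leq_1)$ of order type $\omega$ and $(X,\leq_2)$ not order-scattered. A poset is order-scattered if it contains no copy of $\mathbb{Q}$. Products of chains carry the componentwise order. Two join-semilattices are equimorphic if each embeds into the other by a one-to-one join-preserving map. *)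

theory Defs
  imports Main "HOL-Library.Countable_Set"
begin

definition poset_on :: "'a set \<Rightarrow> ('a \<times> 'a) set \<Rightarrow> bool" where
  "poset_on A r \<longleftrightarrow> r \<subseteq> A \<times> A \<and> partial_order_on A r"

definition chain_on :: "'a set \<Rightarrow> ('a \<times> 'a) set \<Rightarrow> bool" where
  "chain_on A r \<longleftrightarrow> r \<subseteq> A \<times> A \<and> linear_order_on A r"

definition is_join :: "'a set \<Rightarrow> ('a \<times> 'a) set \<Rightarrow> 'a \<Rightarrow> 'a \<Rightarrow> 'a \<Rightarrow> bool" where
  "is_join A r x y z \<longleftrightarrow> z \<in> A \<and> (x, z) \<in> r \<and> (y, z) \<in> r \<and>
     (\<forall>w\<in>A. (x, w) \<in> r \<and> (y, w) \<in> r \<longrightarrow> (z, w) \<in> r)"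

definition join_semilattice :: "'a set \<Rightarrow> ('a \<times> 'a) set \<Rightarrow> bool" where
  "join_semilattice A r \<longleftrightarrow> poset_on A r \<and> (\<forall>x\<in>A. \<forall>y\<in>A. \<exists>z. is_join A r x y z)"

definition join_embedding ::
  "'a set \<Rightarrow> ('a \<times> 'a) set \<Rightarrow> 'b set \<Rightarrow> ('b \<times> 'b) set \<Rightarrow> ('a \<Rightarrow> 'b) \<Rightarrow> bool" where
  "join_embedding A r B s f \<longleftrightarrow> f ` A \<subseteq> B \<and> inj_on f A \<and>
     (\<forall>x\<in>A. \<forall>y\<in>A. \<forall>z\<in>A. is_join A r x y z \<longrightarrow> is_join B s (f x) (f y) (f z))"

definition equimorphic ::
  "'a set \<Rightarrow> ('a \<times> 'a) set \<Rightarrow> 'b set \<Rightarrow> ('b \<times> 'b) set \<Rightarrow> bool" where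
  "equimorphic A r B s \<longleftrightarrow> (\<exists>f. join_embedding A r B s f) \<and> (\<exists>g. join_embedding B s A r g)"

definition order_isomorphic ::
  "'a set \<Rightarrow> ('a \<times> 'a) set \<Rightarrow> 'b set \<Rightarrow> ('b \<times> 'b) set \<Rightarrow> bool" where
  "order_isomorphic A r B s \<longleftrightarrow>
     (\<exists>g. bij_betw g A B \<and> (\<forall>x\<in>A. \<forall>y\<in>A. (x, y) \<in> r \<longleftrightarrow> (g x, g y) \<in> s))"

definition restr :: "('a \<times> 'a) set \<Rightarrow> 'a set \<Rightarrow> ('a \<times> 'a) set" where
  "restr r A = r \<inter> (A \<times> A)"

definition order_type_omega :: "'a set \<Rightarrow> ('a \<times> 'a) set \<Rightarrow> bool" where
  "order_type_omega A r \<longleftrightarrow>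
     (\<exists>g::nat \<Rightarrow> 'a. bij_betw g UNIV A \<and> (\<forall>m n. (g m, g n) \<in> r \<longleftrightarrow> m \<le> n))"

definition order_scattered :: "'a set \<Rightarrow> ('a \<times> 'a) set \<Rightarrow> bool" where
  "order_scattered A r \<longleftrightarrow>
     \<not> (\<exists>h::rat \<Rightarrow> 'a. range h \<subseteq> A \<and> inj h \<and> (\<forall>p q. p \<le> q \<longleftrightarrow> (h p, h q) \<in> r))"

definition bichain :: "'x set \<Rightarrow> ('x \<times> 'x) set \<Rightarrow> ('x \<times> 'x) set \<Rightarrow> bool" where
  "bichain X r1 r2 \<longleftrightarrow> chain_on X r1 \<and> chain_on X r2"

definition initial_segment :: "'x set \<Rightarrow> ('x \<times> 'x) set \<Rightarrow> 'x set \<Rightarrow> bool" where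
  "initial_segment X r I \<longleftrightarrow> I \<subseteq> X \<and> (\<forall>x\<in>I. \<forall>y\<in>X. (y, x) \<in> r \<longrightarrow> y \<in> I)"

definition bichain_closed :: "'x set \<Rightarrow> ('x \<times> 'x) set \<Rightarrow> ('x \<times> 'x) set \<Rightarrow> 'x set \<Rightarrow> bool" where
  "bichain_closed X r1 r2 C \<longleftrightarrow>
     (\<exists>I1 I2. initial_segment X r1 I1 \<and> initial_segment X r2 I2 \<and> C = I1 \<inter> I2)"

definition bichain_closure :: "'x set \<Rightarrow> ('x \<times> 'x) set \<Rightarrow> ('x \<times> 'x) set \<Rightarrow> 'x set \<Rightarrow> 'x set" where
  "bichain_closure X r1 r2 A = \<Inter> {C. bichain_closed X r1 r2 C \<and> A \<subseteq> C}"

definition compacts :: "'x set \<Rightarrow> ('x \<times> 'x) set \<Rightarrow> ('x \<times> 'x) set \<Rightarrow> 'x set set" where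
  "compacts X r1 r2 = {bichain_closure X r1 r2 F | F. finite F \<and> F \<subseteq> X}"

definition compacts_order :: "'x set \<Rightarrow> ('x \<times> 'x) set \<Rightarrow> ('x \<times> 'x) set \<Rightarrow> ('x set \<times> 'x set) set" where
  "compacts_order X r1 r2 = {(A, B). A \<in> compacts X r1 r2 \<and> B \<in> compacts X r1 r2 \<and> A \<subseteq> B}"

text \<open>(S, s) is isomorphic to K(C(B)) for the bichain B = (X, r1, r2) with (X, r1) of order
  type omega and (X, r2) not order-scattered; i.e. B witnesses membership of (S, s) in L_D.\<close>
definition LD_witness ::
  "'a set \<Rightarrow> ('a \<times> 'a) set \<Rightarrow> 'x set \<Rightarrow> ('x \<times> 'x) set \<Rightarrow> ('x \<times> 'x) set \<Rightarrow> bool" where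
  "LD_witness S s X r1 r2 \<longleftrightarrow> bichain X r1 r2 \<and> order_type_omega X r1 \<and>
     \<not> order_scattered X r2 \<and> order_isomorphic S s (compacts X r1 r2) (compacts_order X r1 r2)"

definition prod_order :: "('b \<times> 'b) set \<Rightarrow> ('c \<times> 'c) set \<Rightarrow> (('b \<times> 'c) \<times> ('b \<times> 'c)) set" where
  "prod_order r1 r2 = {((a, b), (c, d)). (a, c) \<in> r1 \<and> (b, d) \<in> r2}"

definition chain_product_rep ::
  "'a set \<Rightarrow> ('a \<times> 'a) set \<Rightarrow> 'b set \<Rightarrow> ('b \<times> 'b) set \<Rightarrow> 'c set \<Rightarrow> ('c \<times> 'c) set
     \<Rightarrow> ('a \<Rightarrow> 'b \<times> 'c) \<Rightarrow> bool" where
  "chain_product_rep S s X1 r1 X2 r2 f \<longleftrightarrow>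
     chain_on X1 r1 \<and> chain_on X2 r2 \<and>
     join_embedding S s (X1 \<times> X2) (prod_order r1 r2) f \<and>
     (let T = f ` S; A1 = fst ` T; A2 = snd ` T in
        order_type_omega A1 (restr r1 A1) \<and>
        \<not> order_scattered A2 (restr r2 A2) \<and>
        (\<forall>x\<in>A1. finite (({x} \<times> A2) \<inter> T)))"

end

theory Submission
  imports Defs
begin

definition mx :: "('a\<times>'a) set \<Rightarrow> 'a \<Rightarrow> 'a \<Rightarrow> 'a" where
  "mx r a b = (if (a,b) \<in> r then b else a)"

definition pj :: "('b\<times>'b) set \<Rightarrow> ('c\<times>'c) set \<Rightarrow> 'b\<times>'c \<Rightarrow> 'b\<times>'c \<Rightarrow> 'b\<times>'c" where
  "pj r1 r2 u v = (mx r1 (fst u) (fst v), mx r2 (snd u) (snd v))"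


lemma chain_refl: "chain_on X r \<Longrightarrow> a \<in> X \<Longrightarrow> (a,a) \<in> r"
  unfolding chain_on_def linear_order_on_def partial_order_on_def preorder_on_def refl_on_def by blast
lemma chain_trans: "chain_on X r \<Longrightarrow> (a,b) \<in> r \<Longrightarrow> (b,c) \<in> r \<Longrightarrow> (a,c) \<in> r"
  unfolding chain_on_def linear_order_on_def partial_order_on_def preorder_on_def
  by (meson transE)
lemma chain_antisym: "chain_on X r \<Longrightarrow> (a,b) \<in> r \<Longrightarrow> (b,a) \<in> r \<Longrightarrow> a = b"
  unfolding chain_on_def linear_order_on_def partial_order_on_def
  by (meson antisymD)
lemma chain_total: "chain_on X r \<Longrightarrow> a \<in> X \<Longrightarrow> b \<in> X \<Longrightarrow> (a,b) \<in> r \<or> (b,a) \<in> r"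
proof -
  assume c: "chain_on X r" and a: "a \<in> X" and b: "b \<in> X"
  show ?thesis
  proof (cases "a = b")
    case True thus ?thesis using chain_refl[OF c a] by simp
  next
    case False
    have "total_on X r" using c unfolding chain_on_def linear_order_on_def by simp
    thus ?thesis using False a b unfolding total_on_def by blast
  qed
qed
lemma chain_sub: "chain_on X r \<Longrightarrow> (a,b) \<in> r \<Longrightarrow> a \<in> X \<and> b \<in> X"
  unfolding chain_on_def by blast

lemma chain_onI:
  assumes "r \<subseteq> X \<times> X" "\<And>a. a \<in> X \<Longrightarrow> (a,a) \<in> r"
    "\<And>a b c. (a,b) \<in> r \<Longrightarrow> (b,c) \<in> r \<Longrightarrow> (a,c) \<in> r"
    "\<And>a b. (a,b) \<in> r \<Longrightarrow> (b,a) \<in> r \<Longrightarrow> a = b"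
    "\<And>a b. a \<in> X \<Longrightarrow> b \<in> X \<Longrightarrow> (a,b) \<in> r \<or> (b,a) \<in> r"
  shows "chain_on X r"
proof -
  have "refl_on X r" using assms(1,2) unfolding refl_on_def by blast
  moreover have "trans r" using assms(3) unfolding trans_def by blast
  moreover have "antisym r" using assms(4) unfolding antisym_def by blast
  moreover have "total_on X r" using assms(5) unfolding total_on_def by blast
  ultimately show ?thesis using assms(1)
    unfolding chain_on_def linear_order_on_def partial_order_on_def preorder_on_def by blast
qed
lemma mx_mem: "a \<in> X \<Longrightarrow> b \<in> X \<Longrightarrow> mx r a b \<in> X"
  unfolding mx_def by auto
lemma mx_ub1: "chain_on X r \<Longrightarrow> a \<in> X \<Longrightarrow> b \<in> X \<Longrightarrow> (a, mx r a b) \<in> r"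
  unfolding mx_def using chain_refl by fastforce
lemma mx_ub2: "chain_on X r \<Longrightarrow> a \<in> X \<Longrightarrow> b \<in> X \<Longrightarrow> (b, mx r a b) \<in> r"
  unfolding mx_def using chain_refl chain_total by fastforce
lemma mx_least: "(a,c) \<in> r \<Longrightarrow> (b,c) \<in> r \<Longrightarrow> (mx r a b, c) \<in> r"
  unfolding mx_def by auto
lemma mx_eq2: "(a,b) \<in> r \<Longrightarrow> mx r a b = b"
  unfolding mx_def by auto
lemma mx_eq1: "chain_on X r \<Longrightarrow> (b,a) \<in> r \<Longrightarrow> mx r a b = a"
  unfolding mx_def using chain_antisym by fastforce

lemma prod_order_iff: "((a,b),(c,d)) \<in> prod_order r1 r2 \<longleftrightarrow> (a,c) \<in> r1 \<and> (b,d) \<in> r2"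
  unfolding prod_order_def by auto

lemma prod_antisym: "chain_on X1 r1 \<Longrightarrow> chain_on X2 r2 \<Longrightarrow> (u,v) \<in> prod_order r1 r2
   \<Longrightarrow> (v,u) \<in> prod_order r1 r2 \<Longrightarrow> u = v"
  by (cases u; cases v) (auto simp: prod_order_iff dest: chain_antisym)

lemma pj_mem: "u \<in> X1 \<times> X2 \<Longrightarrow> v \<in> X1 \<times> X2 \<Longrightarrow> pj r1 r2 u v \<in> X1 \<times> X2"
  unfolding pj_def by (auto intro: mx_mem)

lemma pj_ub1: "chain_on X1 r1 \<Longrightarrow> chain_on X2 r2 \<Longrightarrow> u \<in> X1 \<times> X2 \<Longrightarrow> v \<in> X1 \<times> X2
   \<Longrightarrow> (u, pj r1 r2 u v) \<in> prod_order r1 r2"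
  by (cases u; cases v) (auto simp: pj_def prod_order_iff intro: mx_ub1)
lemma pj_ub2: "chain_on X1 r1 \<Longrightarrow> chain_on X2 r2 \<Longrightarrow> u \<in> X1 \<times> X2 \<Longrightarrow> v \<in> X1 \<times> X2
   \<Longrightarrow> (v, pj r1 r2 u v) \<in> prod_order r1 r2"
  by (cases u; cases v) (auto simp: pj_def prod_order_iff intro: mx_ub2)
lemma pj_least: "(u,w) \<in> prod_order r1 r2 \<Longrightarrow> (v,w) \<in> prod_order r1 r2
   \<Longrightarrow> (pj r1 r2 u v, w) \<in> prod_order r1 r2"
  by (cases u; cases v; cases w) (auto simp: pj_def prod_order_iff intro: mx_least)

definition jclosed where
  "jclosed r1 r2 T \<longleftrightarrow> (\<forall>u\<in>T. \<forall>v\<in>T. pj r1 r2 u v \<in> T)"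

lemma is_join_closed:
  assumes c1: "chain_on X1 r1" and c2: "chain_on X2 r2" and TX: "T \<subseteq> X1 \<times> X2"
    and jc: "jclosed r1 r2 T" and u: "u \<in> T" and v: "v \<in> T"
  shows "is_join T (restr (prod_order r1 r2) T) u v w \<longleftrightarrow> w = pj r1 r2 u v"
proof
  have pT: "pj r1 r2 u v \<in> T" using jc u v unfolding jclosed_def by auto
  have ub1: "(u, pj r1 r2 u v) \<in> prod_order r1 r2" using pj_ub1[OF c1 c2, of u v] u v TX by auto
  have ub2: "(v, pj r1 r2 u v) \<in> prod_order r1 r2" using pj_ub2[OF c1 c2, of u v] u v TX by auto
  {
    assume j: "is_join T (restr (prod_order r1 r2) T) u v w"
    hence "w \<in> T" "(u,w) \<in> prod_order r1 r2" "(v,w) \<in> prod_order r1 r2"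
      unfolding is_join_def restr_def by auto
    hence a: "(pj r1 r2 u v, w) \<in> prod_order r1 r2" by (intro pj_least)
    have "(w, pj r1 r2 u v) \<in> prod_order r1 r2"
      using j pT ub1 ub2 u v unfolding is_join_def restr_def by auto
    thus "w = pj r1 r2 u v" using a prod_antisym[OF c1 c2] by blast
  }
  {
    assume "w = pj r1 r2 u v"
    thus "is_join T (restr (prod_order r1 r2) T) u v w"
      unfolding is_join_def restr_def using pT ub1 ub2 u v
      by (auto intro: pj_least)
  }
qed

lemma jclosed_full: "jclosed r1 r2 (X1 \<times> X2)"
  unfolding jclosed_def using pj_mem by blast

lemma restr_full: "chain_on X1 r1 \<Longrightarrow> chain_on X2 r2 \<Longrightarrow>
   restr (prod_order r1 r2) (X1 \<times> X2) = prod_order r1 r2"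
  unfolding restr_def prod_order_def chain_on_def by auto

lemma is_join_prod:
  assumes c1: "chain_on X1 r1" and c2: "chain_on X2 r2" and u: "u \<in> X1 \<times> X2" and v: "v \<in> X1 \<times> X2"
  shows "is_join (X1 \<times> X2) (prod_order r1 r2) u v w \<longleftrightarrow> w = pj r1 r2 u v"
  using is_join_closed[OF c1 c2 subset_refl jclosed_full u v] restr_full[OF c1 c2] by simp

lemma jemb_closed:
  assumes c1: "chain_on X1 r1" and c2: "chain_on X2 r2" and TX: "T \<subseteq> X1 \<times> X2"
    and jc: "jclosed r1 r2 T"
    and d1: "chain_on Y1 s1" and d2: "chain_on Y2 s2" and TY: "T' \<subseteq> Y1 \<times> Y2"
    and jc': "jclosed s1 s2 T'"
    and im: "F ` T \<subseteq> T'" and inj: "inj_on F T"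
    and hom: "\<And>u v. u \<in> T \<Longrightarrow> v \<in> T \<Longrightarrow> F (pj r1 r2 u v) = pj s1 s2 (F u) (F v)"
  shows "join_embedding T (restr (prod_order r1 r2) T) T' (restr (prod_order s1 s2) T') F"
  unfolding join_embedding_def
proof (intro conjI im inj ballI impI)
  fix x y z assume x: "x \<in> T" and y: "y \<in> T" and z: "z \<in> T"
    and j: "is_join T (restr (prod_order r1 r2) T) x y z"
  have "z = pj r1 r2 x y" using j is_join_closed[OF c1 c2 TX jc x y] by simp
  hence "F z = pj s1 s2 (F x) (F y)" using hom x y by simp
  moreover have "F x \<in> T'" "F y \<in> T'" using im x y by auto
  ultimately show "is_join T' (restr (prod_order s1 s2) T') (F x) (F y) (F z)"
    using is_join_closed[OF d1 d2 TY jc'] by simp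
qed

lemma jemb_comp: "join_embedding A r B s f \<Longrightarrow> join_embedding B s C t g \<Longrightarrow>
   join_embedding A r C t (g \<circ> f)"
  unfolding join_embedding_def
proof (intro conjI ballI impI)
  assume a: "f ` A \<subseteq> B \<and> inj_on f A \<and> (\<forall>x\<in>A. \<forall>y\<in>A. \<forall>z\<in>A. is_join A r x y z \<longrightarrow> is_join B s (f x) (f y) (f z))"
    and b: "g ` B \<subseteq> C \<and> inj_on g B \<and> (\<forall>x\<in>B. \<forall>y\<in>B. \<forall>z\<in>B. is_join B s x y z \<longrightarrow> is_join C t (g x) (g y) (g z))"
  show "(g \<circ> f) ` A \<subseteq> C" using a b by auto
  show "inj_on (g \<circ> f) A" using a b by (meson comp_inj_on inj_on_subset)
  fix x y z assume "x \<in> A" "y \<in> A" "z \<in> A" "is_join A r x y z"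
  thus "is_join C t ((g \<circ> f) x) ((g \<circ> f) y) ((g \<circ> f) z)" using a b by (auto simp: image_subset_iff)
qed


lemma iso_is_join:
  assumes bij: "bij_betw g A B" and ord: "\<And>x y. x \<in> A \<Longrightarrow> y \<in> A \<Longrightarrow> (x,y) \<in> r \<longleftrightarrow> (g x, g y) \<in> s"
    and x: "x \<in> A" and y: "y \<in> A" and z: "z \<in> A"
  shows "is_join A r x y z \<longleftrightarrow> is_join B s (g x) (g y) (g z)"
proof -
  have gA: "g ` A = B" using bij by (simp add: bij_betw_def)
  have o2: "\<And>w. w \<in> A \<Longrightarrow> (x,w) \<in> r \<longleftrightarrow> (g x, g w) \<in> s" "\<And>w. w \<in> A \<Longrightarrow> (y,w) \<in> r \<longleftrightarrow> (g y, g w) \<in> s"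
     "\<And>w. w \<in> A \<Longrightarrow> (z,w) \<in> r \<longleftrightarrow> (g z, g w) \<in> s" using ord x y z by auto
  have "(\<forall>w\<in>A. (x, w) \<in> r \<and> (y, w) \<in> r \<longrightarrow> (z, w) \<in> r) \<longleftrightarrow>
        (\<forall>w\<in>A. (g x, g w) \<in> s \<and> (g y, g w) \<in> s \<longrightarrow> (g z, g w) \<in> s)"
    using o2 by blast
  also have "\<dots> \<longleftrightarrow> (\<forall>w\<in>B. (g x, w) \<in> s \<and> (g y, w) \<in> s \<longrightarrow> (g z, w) \<in> s)"
    unfolding gA[symmetric] by blast
  finally have q: "(\<forall>w\<in>A. (x, w) \<in> r \<and> (y, w) \<in> r \<longrightarrow> (z, w) \<in> r) \<longleftrightarrow>
        (\<forall>w\<in>B. (g x, w) \<in> s \<and> (g y, w) \<in> s \<longrightarrow> (g z, w) \<in> s)" .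
  have "g z \<in> B" using z gA by blast
  thus ?thesis unfolding is_join_def using q z ord[OF x z] ord[OF y z] by blast
qed

lemma iso_jemb:
  assumes bij: "bij_betw g A B" and ord: "\<And>x y. x \<in> A \<Longrightarrow> y \<in> A \<Longrightarrow> (x,y) \<in> r \<longleftrightarrow> (g x, g y) \<in> s"
  shows "join_embedding A r B s g" "join_embedding B s A r (inv_into A g)"
proof -
  have gA: "g ` A = B" "inj_on g A" using bij by (auto simp: bij_betw_def)
  show "join_embedding A r B s g" unfolding join_embedding_def
  proof (intro conjI ballI impI)
    show "g ` A \<subseteq> B" using gA by simp
    show "inj_on g A" using gA by simp
    fix x y z assume "x \<in> A" "y \<in> A" "z \<in> A" "is_join A r x y z"
    thus "is_join B s (g x) (g y) (g z)" using iso_is_join[OF bij ord] by blast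
  qed
  have bij': "bij_betw (inv_into A g) B A" using bij by (rule bij_betw_inv_into)
  have ord': "\<And>x y. x \<in> B \<Longrightarrow> y \<in> B \<Longrightarrow> (x,y) \<in> s \<longleftrightarrow> (inv_into A g x, inv_into A g y) \<in> r"
  proof -
    fix x y assume x: "x \<in> B" and y: "y \<in> B"
    have "inv_into A g x \<in> A" "inv_into A g y \<in> A" using x y gA by (auto intro: inv_into_into)
    moreover have "g (inv_into A g x) = x" "g (inv_into A g y) = y" using x y gA by (auto intro: f_inv_into_f)
    ultimately show "(x,y) \<in> s \<longleftrightarrow> (inv_into A g x, inv_into A g y) \<in> r" using ord[of "inv_into A g x" "inv_into A g y"] by simp
  qed
  have gB: "inv_into A g ` B = A" "inj_on (inv_into A g) B" using bij' by (auto simp: bij_betw_def)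
  show "join_embedding B s A r (inv_into A g)" unfolding join_embedding_def
  proof (intro conjI ballI impI)
    show "inv_into A g ` B \<subseteq> A" using gB by simp
    show "inj_on (inv_into A g) B" using gB by simp
    fix x y z assume "x \<in> B" "y \<in> B" "z \<in> B" "is_join B s x y z"
    thus "is_join A r (inv_into A g x) (inv_into A g y) (inv_into A g z)" using iso_is_join[OF bij' ord'] by blast
  qed
qed

lemma iso_jemb2:
  assumes "order_isomorphic A r B s"
  shows "\<exists>g. join_embedding A r B s g" "\<exists>g. join_embedding B s A r g"
proof -
  obtain g where g1: "bij_betw g A B" and g2: "\<forall>x\<in>A. \<forall>y\<in>A. (x, y) \<in> r \<longleftrightarrow> (g x, g y) \<in> s"
    using assms unfolding order_isomorphic_def by blast
  have o: "\<And>x y. x \<in> A \<Longrightarrow> y \<in> A \<Longrightarrow> (x,y) \<in> r \<longleftrightarrow> (g x, g y) \<in> s" using g2 by blast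
  show "\<exists>g. join_embedding A r B s g" using iso_jemb(1)[OF g1 o] by blast
  show "\<exists>g. join_embedding B s A r g" using iso_jemb(2)[OF g1 o] by blast
qed

lemma sl_rep:
  assumes S: "join_semilattice S s" and c1: "chain_on X1 r1" and c2: "chain_on X2 r2"
    and f: "join_embedding S s (X1 \<times> X2) (prod_order r1 r2) f"
  shows "f ` S \<subseteq> X1 \<times> X2" "jclosed r1 r2 (f ` S)"
    "join_embedding S s (f ` S) (restr (prod_order r1 r2) (f ` S)) f"
    "join_embedding (f ` S) (restr (prod_order r1 r2) (f ` S)) S s (inv_into S f)"
proof -
  show fS: "f ` S \<subseteq> X1 \<times> X2" using f unfolding join_embedding_def by simp
  have inj: "inj_on f S" using f unfolding join_embedding_def by simp
  have key: "\<And>x y. x \<in> S \<Longrightarrow> y \<in> S \<Longrightarrow> \<exists>z\<in>S. is_join S s x y z \<and> f z = pj r1 r2 (f x) (f y)"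
  proof -
    fix x y assume x: "x \<in> S" and y: "y \<in> S"
    obtain z where j: "is_join S s x y z" using S x y unfolding join_semilattice_def by blast
    hence z: "z \<in> S" unfolding is_join_def by simp
    have "is_join (X1 \<times> X2) (prod_order r1 r2) (f x) (f y) (f z)"
      using f x y z j unfolding join_embedding_def by blast
    hence "f z = pj r1 r2 (f x) (f y)" using is_join_prod[OF c1 c2] fS x y by blast
    thus "\<exists>z\<in>S. is_join S s x y z \<and> f z = pj r1 r2 (f x) (f y)" using z j by blast
  qed
  show jc: "jclosed r1 r2 (f ` S)" unfolding jclosed_def
  proof (intro ballI)
    fix u v assume "u \<in> f ` S" "v \<in> f ` S"
    then obtain x y where "x \<in> S" "y \<in> S" "u = f x" "v = f y" by blast
    with key[of x y] show "pj r1 r2 u v \<in> f ` S" by (metis image_eqI)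
  qed
  show "join_embedding S s (f ` S) (restr (prod_order r1 r2) (f ` S)) f"
    unfolding join_embedding_def
  proof (intro conjI ballI impI subset_refl inj)
    fix x y z assume x: "x \<in> S" and y: "y \<in> S" and z: "z \<in> S" and j: "is_join S s x y z"
    have "is_join (X1 \<times> X2) (prod_order r1 r2) (f x) (f y) (f z)"
      using f x y z j unfolding join_embedding_def by blast
    hence "f z = pj r1 r2 (f x) (f y)" using is_join_prod[OF c1 c2] fS x y by blast
    thus "is_join (f ` S) (restr (prod_order r1 r2) (f ` S)) (f x) (f y) (f z)"
      using is_join_closed[OF c1 c2 fS jc] x y by simp
  qed
  show "join_embedding (f ` S) (restr (prod_order r1 r2) (f ` S)) S s (inv_into S f)"
    unfolding join_embedding_def
  proof (intro conjI ballI impI)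
    show "inv_into S f ` f ` S \<subseteq> S" by (auto intro: inv_into_into)
    show "inj_on (inv_into S f) (f ` S)" using inj by (simp add: inj_on_inv_into)
    fix u v w assume u: "u \<in> f ` S" and v: "v \<in> f ` S" and w: "w \<in> f ` S"
      and j: "is_join (f ` S) (restr (prod_order r1 r2) (f ` S)) u v w"
    have wpj: "w = pj r1 r2 u v" using j is_join_closed[OF c1 c2 fS jc u v] by simp
    obtain x y w' where x: "x \<in> S" "u = f x" and y: "y \<in> S" "v = f y" and w': "w' \<in> S" "w = f w'"
      using u v w by blast
    obtain z where z: "z \<in> S" "is_join S s x y z" "f z = pj r1 r2 (f x) (f y)" using key x y by blast
    have "z = w'" using inj z w' wpj x y by (metis inj_onD)
    thus "is_join S s (inv_into S f u) (inv_into S f v) (inv_into S f w)"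
      using z x y w' inj wpj by (metis inv_into_f_f)
  qed
qed

lemma jemb_widen:
  assumes c1: "chain_on X1 r1" and c2: "chain_on X2 r2" and TX: "T \<subseteq> X1 \<times> X2"
    and jc: "jclosed r1 r2 T" and F: "join_embedding A r T (restr (prod_order r1 r2) T) F"
  shows "join_embedding A r (X1 \<times> X2) (prod_order r1 r2) F"
  unfolding join_embedding_def
proof (intro conjI ballI impI)
  show "F ` A \<subseteq> X1 \<times> X2" using F TX unfolding join_embedding_def by blast
  show "inj_on F A" using F unfolding join_embedding_def by blast
  fix x y z assume x: "x \<in> A" and y: "y \<in> A" and z: "z \<in> A" and j: "is_join A r x y z"
  have FT: "F x \<in> T" "F y \<in> T" using F x y unfolding join_embedding_def by auto
  have "is_join T (restr (prod_order r1 r2) T) (F x) (F y) (F z)"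
    using F x y z j unfolding join_embedding_def by blast
  hence "F z = pj r1 r2 (F x) (F y)" using is_join_closed[OF c1 c2 TX jc] FT by blast
  thus "is_join (X1 \<times> X2) (prod_order r1 r2) (F x) (F y) (F z)"
    using is_join_prod[OF c1 c2] FT TX by blast
qed


lemma finite_max_lt:
  assumes fin: "finite L" and ne: "L \<noteq> {}" and sub: "L \<subseteq> K"
    and tr: "\<And>a b c. lt a b \<Longrightarrow> lt b c \<Longrightarrow> lt a c"
    and tot: "\<And>a b. a \<in> K \<Longrightarrow> b \<in> K \<Longrightarrow> a \<noteq> b \<Longrightarrow> lt a b \<or> lt b a"
  shows "\<exists>m\<in>L. \<forall>l\<in>L. l = m \<or> lt l m"
  using fin ne sub
proof (induction L rule: finite_ne_induct)
  case (singleton x) thus ?case by simp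
next
  case (insert x F)
  then obtain m where m: "m \<in> F" "\<forall>l\<in>F. l = m \<or> lt l m" by auto
  have xK: "x \<in> K" and mK: "m \<in> K" using insert m by auto
  show ?case
  proof (cases "lt m x")
    case True
    have "\<forall>l\<in>insert x F. l = x \<or> lt l x"
    proof
      fix l assume "l \<in> insert x F"
      hence "l = x \<or> l = m \<or> lt l m" using m by blast
      thus "l = x \<or> lt l x" using True tr by blast
    qed
    thus ?thesis by blast
  next
    case False
    hence "x = m \<or> lt x m" using tot[OF xK mK] by blast
    hence "\<forall>l\<in>insert x F. l = m \<or> lt l m" using m by blast
    thus ?thesis using m(1) by blast
  qed
qed

locale forth_setup =
  fixes le :: "nat \<Rightarrow> nat \<Rightarrow> bool" and lt :: "'k \<Rightarrow> 'k \<Rightarrow> bool" and key :: "'t \<Rightarrow> 'k"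
    and E :: "'t set" and wt :: "'t \<Rightarrow> nat" and strong :: bool and lo hi :: 't
  assumes letot: "\<And>i j. le i j \<or> le j i" and leanti: "\<And>i j. le i j \<Longrightarrow> le j i \<Longrightarrow> i = j"
    and letr: "\<And>i j k. le i j \<Longrightarrow> le j k \<Longrightarrow> le i k"
    and lttr: "\<And>a b c. lt a b \<Longrightarrow> lt b c \<Longrightarrow> lt a c" and ltirr: "\<And>a. \<not> lt a a"
    and lttot: "\<And>a b. a \<in> key ` E \<Longrightarrow> b \<in> key ` E \<Longrightarrow> a \<noteq> b \<Longrightarrow> lt a b \<or> lt b a"
    and lo: "lo \<in> E" and hi: "hi \<in> E" and lohi: "lt (key lo) (key hi)"
    and dense: "\<And>a b N. a \<in> E \<Longrightarrow> b \<in> E \<Longrightarrow> lt (key a) (key b) \<Longrightarrow>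
        \<exists>c\<in>E. lt (key a) (key c) \<and> lt (key c) (key b) \<and> (strong \<longrightarrow> N < wt c)"
begin

definition P :: "(nat \<Rightarrow> 't) \<Rightarrow> nat \<Rightarrow> 't \<Rightarrow> bool" where
  "P f k c \<longleftrightarrow> c \<in> E \<and> lt (key lo) (key c) \<and> lt (key c) (key hi) \<and>
     (\<forall>i<k. (le i k \<longrightarrow> lt (key (f i)) (key c)) \<and> (le k i \<longrightarrow> lt (key c) (key (f i)))) \<and>
     (strong \<longrightarrow> (if k = 0 then wt lo else wt (f (k - 1))) < wt c)"

definition ch :: "(nat \<Rightarrow> 't) \<Rightarrow> nat \<Rightarrow> 't" where
  "ch f k = (SOME c. P f k c)"

primrec F :: "nat \<Rightarrow> nat \<Rightarrow> 't" where
  "F 0 = (\<lambda>_. lo)"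
| "F (Suc k) = (F k)(k := ch (F k) k)"

definition \<rho> :: "nat \<Rightarrow> 't" where "\<rho> k = F (Suc k) k"

lemma F_prefix: "i < k \<Longrightarrow> F k i = \<rho> i"
proof (induction k)
  case 0 thus ?case by simp
next
  case (Suc k)
  show ?case
  proof (cases "i = k")
    case True thus ?thesis by (simp add: \<rho>_def)
  next
    case False
    hence "i < k" using Suc.prems by simp
    thus ?thesis using Suc.IH False by simp
  qed
qed

lemma P_cong: "(\<And>i. i < k \<Longrightarrow> f i = g i) \<Longrightarrow> P f k c = P g k c"
  unfolding P_def by (cases k) auto

lemma rho_ch: "\<rho> k = ch \<rho> k"
proof -
  have "\<rho> k = ch (F k) k" by (simp add: \<rho>_def)
  also have "ch (F k) k = ch \<rho> k"
  proof -
    have "(\<lambda>c. P (F k) k c) = (\<lambda>c. P \<rho> k c)"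
      by (rule ext, rule P_cong, simp add: F_prefix)
    thus ?thesis unfolding ch_def by simp
  qed
  finally show ?thesis .
qed

lemma rho_P: "P \<rho> k (\<rho> k)"
proof (induction k rule: less_induct)
  case (less k)
  define L where "L = key ` ({lo} \<union> \<rho> ` {i. i < k \<and> le i k})"
  define U where "U = key ` ({hi} \<union> \<rho> ` {i. i < k \<and> le k i})"
  have rE: "\<And>i. i < k \<Longrightarrow> \<rho> i \<in> E" using less unfolding P_def by blast
  have LK: "L \<subseteq> key ` E" unfolding L_def using rE lo by auto
  have UK: "U \<subseteq> key ` E" unfolding U_def using rE hi by auto
  have finL: "finite L" "L \<noteq> {}" unfolding L_def by auto
  have finU: "finite U" "U \<noteq> {}" unfolding U_def by auto
  have sep: "\<And>l u. l \<in> L \<Longrightarrow> u \<in> U \<Longrightarrow> lt l u"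
  proof -
    fix l u assume l: "l \<in> L" and u: "u \<in> U"
    from l obtain a where a: "l = key a" "a = lo \<or> (\<exists>i. i < k \<and> le i k \<and> a = \<rho> i)"
      unfolding L_def by blast
    from u obtain b where b: "u = key b" "b = hi \<or> (\<exists>j. j < k \<and> le k j \<and> b = \<rho> j)"
      unfolding U_def by blast
    show "lt l u"
    proof (cases "a = lo")
      case True
      show ?thesis
      proof (cases "b = hi")
        case True thus ?thesis using \<open>a = lo\<close> a b lohi by simp
      next
        case False
        then obtain j where "j < k" "b = \<rho> j" using b by blast
        thus ?thesis using less[of j] \<open>a = lo\<close> a b unfolding P_def by simp
      qed
    next
      case False
      then obtain i where i: "i < k" "le i k" "a = \<rho> i" using a by blast
      show ?thesis
      proof (cases "b = hi")
        case True thus ?thesis using less[of i] i a b unfolding P_def by simp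
      next
        case False
        then obtain j where j: "j < k" "le k j" "b = \<rho> j" using b by blast
        have ij: "le i j" using letr i j by blast
        have "i \<noteq> j" using i j leanti by fastforce
        show ?thesis
        proof (cases "i < j")
          case True
          thus ?thesis using less[of j] j ij a b i unfolding P_def by simp
        next
          case False
          hence "j < i" using \<open>i \<noteq> j\<close> by simp
          thus ?thesis using less[of i] i ij a b j unfolding P_def by simp
        qed
      qed
    qed
  qed
  have "\<exists>m\<in>L. \<forall>l\<in>L. l = m \<or> lt l m"
    apply (rule finite_max_lt[OF finL LK])
     apply (erule (1) lttr)
    apply (erule (2) lttot)
    done
  then obtain lm where lm: "lm \<in> L" "\<forall>l\<in>L. l = lm \<or> lt l lm" by blast
  have tr': "\<And>a b c. lt b a \<Longrightarrow> lt c b \<Longrightarrow> lt c a" using lttr by blast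
  have tot': "\<And>a b. a \<in> key ` E \<Longrightarrow> b \<in> key ` E \<Longrightarrow> a \<noteq> b \<Longrightarrow> lt b a \<or> lt a b"
    using lttot by blast
  have "\<exists>m\<in>U. \<forall>l\<in>U. l = m \<or> lt m l"
    apply (rule finite_max_lt[OF finU UK, where lt="\<lambda>a b. lt b a"])
     apply (erule (1) tr')
    apply (erule (2) tot')
    done
  then obtain um where um: "um \<in> U" "\<forall>l\<in>U. l = um \<or> lt um l" by blast
  have "lt lm um" using sep lm um by blast
  obtain a b where ab: "a \<in> E" "b \<in> E" "lm = key a" "um = key b"
    using lm(1) um(1) LK UK by blast
  obtain c where c: "c \<in> E" "lt lm (key c)" "lt (key c) um"
      "strong \<longrightarrow> (if k = 0 then wt lo else wt (\<rho> (k - 1))) < wt c"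
    using dense[OF ab(1,2), of "if k = 0 then wt lo else wt (\<rho> (k - 1))"] \<open>lt lm um\<close> ab by blast
  have below: "\<And>l. l \<in> L \<Longrightarrow> lt l (key c)"
  proof -
    fix l assume "l \<in> L"
    hence "l = lm \<or> lt l lm" using lm by blast
    thus "lt l (key c)" using c(2) lttr[of l lm "key c"] by blast
  qed
  have above: "\<And>u. u \<in> U \<Longrightarrow> lt (key c) u"
  proof -
    fix l assume "l \<in> U"
    hence "l = um \<or> lt um l" using um by blast
    thus "lt (key c) l" using c(3) lttr[of "key c" um l] by blast
  qed
  have "P \<rho> k c" unfolding P_def
  proof (intro conjI)
    show "c \<in> E" by fact
    show "lt (key lo) (key c)" using below unfolding L_def by blast
    show "lt (key c) (key hi)" using above unfolding U_def by blast
    show "\<forall>i<k. (le i k \<longrightarrow> lt (key (\<rho> i)) (key c)) \<and> (le k i \<longrightarrow> lt (key c) (key (\<rho> i)))"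
    proof (intro allI impI conjI)
      fix i assume "i < k" "le i k" thus "lt (key (\<rho> i)) (key c)" using below unfolding L_def by blast
    next
      fix i assume "i < k" "le k i" thus "lt (key c) (key (\<rho> i))" using above unfolding U_def by blast
    qed
    show "strong \<longrightarrow> (if k = 0 then wt lo else wt (\<rho> (k - 1))) < wt c" by fact
  qed
  hence "P \<rho> k (ch \<rho> k)" unfolding ch_def by (rule someI)
  thus ?case using rho_ch[of k] by simp
qed

lemma forth_result:
  "\<exists>\<rho>. (\<forall>i. \<rho> i \<in> E \<and> lt (key lo) (key (\<rho> i)) \<and> lt (key (\<rho> i)) (key hi)) \<and>
     (\<forall>i j. le i j \<longrightarrow> i \<noteq> j \<longrightarrow> lt (key (\<rho> i)) (key (\<rho> j))) \<and>
     (strong \<longrightarrow> wt lo < wt (\<rho> 0) \<and> (\<forall>i. wt (\<rho> i) < wt (\<rho> (Suc i))))"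
proof (intro exI conjI allI impI)
  fix i
  show "\<rho> i \<in> E" "lt (key lo) (key (\<rho> i))" "lt (key (\<rho> i)) (key hi)"
    using rho_P[of i] unfolding P_def by auto
next
  fix i j assume "le i j" "i \<noteq> j"
  show "lt (key (\<rho> i)) (key (\<rho> j))"
  proof (cases "i < j")
    case True thus ?thesis using rho_P[of j] \<open>le i j\<close> unfolding P_def by auto
  next
    case False hence "j < i" using \<open>i \<noteq> j\<close> by simp
    thus ?thesis using rho_P[of i] \<open>le i j\<close> unfolding P_def by auto
  qed
next
  assume strong
  show "wt lo < wt (\<rho> 0)" using rho_P[of 0] \<open>strong\<close> unfolding P_def by auto
  fix i show "wt (\<rho> i) < wt (\<rho> (Suc i))" using rho_P[of "Suc i"] \<open>strong\<close> unfolding P_def by auto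
qed

end


lemma dense_Q_copy:
  fixes lt :: "'k \<Rightarrow> 'k \<Rightarrow> bool" and key :: "'t \<Rightarrow> 'k"
  assumes lttr: "\<And>a b c. lt a b \<Longrightarrow> lt b c \<Longrightarrow> lt a c" and ltirr: "\<And>a. \<not> lt a a"
    and lttot: "\<And>a b. a \<in> key ` E \<Longrightarrow> b \<in> key ` E \<Longrightarrow> a \<noteq> b \<Longrightarrow> lt a b \<or> lt b a"
    and lo: "lo \<in> E" and hi: "hi \<in> E" and lohi: "lt (key lo) (key hi)"
    and dense: "\<And>a b. a \<in> E \<Longrightarrow> b \<in> E \<Longrightarrow> lt (key a) (key b) \<Longrightarrow>
        \<exists>c\<in>E. lt (key a) (key c) \<and> lt (key c) (key b)"
  shows "\<exists>h::rat \<Rightarrow> 't. (\<forall>p. h p \<in> E) \<and> (\<forall>p q. p < q \<longrightarrow> lt (key (h p)) (key (h q)))"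
proof -
  define en where "en = from_nat_into (UNIV :: rat set)"
  have bij: "bij_betw en UNIV (UNIV :: rat set)" unfolding en_def
    by (rule bij_betw_from_nat_into) (simp_all add: infinite_UNIV_char_0)
  hence inj: "inj en" and surj: "surj en" by (auto simp: bij_betw_def)
  interpret fs: forth_setup "\<lambda>i j. en i \<le> en j" lt key E "\<lambda>_. 0" False lo hi
  proof (unfold_locales)
    fix i j show "en i \<le> en j \<or> en j \<le> en i" by auto
  next
    fix i j assume "en i \<le> en j" "en j \<le> en i" thus "i = j" using inj by (auto dest: injD)
  next
    fix i j k assume "en i \<le> en j" "en j \<le> en k" thus "en i \<le> en k" by simp
  next
    fix a b c assume "lt a b" "lt b c" thus "lt a c" by (rule lttr)
  next
    fix a show "\<not> lt a a" by (rule ltirr)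
  next
    fix a b assume "a \<in> key ` E" "b \<in> key ` E" "a \<noteq> b" thus "lt a b \<or> lt b a" by (rule lttot)
  next
    fix a b :: 't and N :: nat assume "a \<in> E" "b \<in> E" "lt (key a) (key b)"
    thus "\<exists>c\<in>E. lt (key a) (key c) \<and> lt (key c) (key b) \<and> (False \<longrightarrow> N < 0)" using dense by blast
  qed (fact lo hi lohi)+
  obtain \<rho> where r: "\<forall>i. \<rho> i \<in> E" "\<forall>i j. en i \<le> en j \<longrightarrow> i \<noteq> j \<longrightarrow> lt (key (\<rho> i)) (key (\<rho> j))"
    using fs.forth_result by blast
  define h where "h p = \<rho> (inv en p)" for p
  have "\<forall>p. h p \<in> E" unfolding h_def using r by blast
  moreover have "\<forall>p q. p < q \<longrightarrow> lt (key (h p)) (key (h q))"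
  proof (intro allI impI)
    fix p q :: rat assume "p < q"
    have e: "en (inv en p) = p" "en (inv en q) = q" using surj by (auto simp: surj_f_inv_f)
    have "inv en p \<noteq> inv en q"
    proof
      assume "inv en p = inv en q"
      hence "en (inv en p) = en (inv en q)" by simp
      thus False using e \<open>p < q\<close> by simp
    qed
    thus "lt (key (h p)) (key (h q))" unfolding h_def using r(2) e \<open>p < q\<close> by simp
  qed
  ultimately show ?thesis by blast
qed


definition LE1 :: "(nat \<times> nat) set" where "LE1 = {(a,b). a \<le> b}"

locale bich =
  fixes X :: "'x set" and q1 q2 :: "('x \<times> 'x) set" and g :: "nat \<Rightarrow> 'x"
  assumes c1: "chain_on X q1" and c2: "chain_on X q2" and gbij: "bij_betw g UNIV X"
    and gord: "\<And>m n. (g m, g n) \<in> q1 \<longleftrightarrow> m \<le> n"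
begin

definition le2 :: "nat \<Rightarrow> nat \<Rightarrow> bool" where "le2 i j \<longleftrightarrow> (g i, g j) \<in> q2"

definition L2 :: "(nat \<times> nat) set" where
  "L2 = {(a,b). a = 0 \<or> (0 < a \<and> 0 < b \<and> le2 (a - 1) (b - 1))}"

definition TK :: "(nat \<times> nat) set" where
  "TK = {(0,0)} \<union> {(Suc i, Suc j) | i j. j \<le> i \<and> le2 i j}"

definition D :: "'x \<Rightarrow> 'x \<Rightarrow> 'x set" where
  "D a b = {y \<in> X. (y, a) \<in> q1 \<and> (y, b) \<in> q2}"

definition \<kappa> :: "nat \<times> nat \<Rightarrow> 'x set" where
  "\<kappa> u = (if fst u = 0 then {} else D (g (fst u - 1)) (g (snd u - 1)))"

lemma g_in: "g i \<in> X" using gbij by (auto simp: bij_betw_def)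
lemma g_inj: "g i = g j \<Longrightarrow> i = j" using gbij by (auto simp: bij_betw_def dest: injD)
lemma g_surj: "x \<in> X \<Longrightarrow> \<exists>i. x = g i" using gbij by (auto simp: bij_betw_def)

lemma le2_refl: "le2 i i" unfolding le2_def using chain_refl[OF c2 g_in] .
lemma le2_trans: "le2 i j \<Longrightarrow> le2 j k \<Longrightarrow> le2 i k" unfolding le2_def using chain_trans[OF c2] by blast
lemma le2_antisym: "le2 i j \<Longrightarrow> le2 j i \<Longrightarrow> i = j" unfolding le2_def
  using chain_antisym[OF c2] g_inj by blast
lemma le2_total: "le2 i j \<or> le2 j i" unfolding le2_def using chain_total[OF c2 g_in g_in] .

lemma chain_LE1: "chain_on UNIV LE1"
  by (rule chain_onI) (auto simp: LE1_def)

lemma L2_simps: "(0, b) \<in> L2" "(Suc i, 0) \<notin> L2" "(Suc i, Suc j) \<in> L2 \<longleftrightarrow> le2 i j"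
  unfolding L2_def by auto

lemma L2_cases: "(a,b) \<in> L2 \<longleftrightarrow> a = 0 \<or> (\<exists>i j. a = Suc i \<and> b = Suc j \<and> le2 i j)"
  unfolding L2_def by (cases a; cases b) auto

lemma chain_L2: "chain_on UNIV L2"
proof (rule chain_onI)
  fix a show "(a,a) \<in> L2" using le2_refl by (cases a) (auto simp: L2_simps)
next
  fix a b c assume "(a,b) \<in> L2" "(b,c) \<in> L2" thus "(a,c) \<in> L2"
    unfolding L2_cases using le2_trans by fastforce
next
  fix a b assume "(a,b) \<in> L2" "(b,a) \<in> L2" thus "a = b"
    unfolding L2_cases using le2_antisym by fastforce
next
  fix a b :: nat show "(a,b) \<in> L2 \<or> (b,a) \<in> L2"
    using le2_total by (cases a; cases b) (auto simp: L2_simps)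
qed simp

lemma mx_LE1: "mx LE1 a b = max a b" unfolding mx_def LE1_def by auto
lemma mx_L2_0: "mx L2 0 b = b" "mx L2 a 0 = a"
  unfolding mx_def L2_def by auto
lemma mx_L2_S: "mx L2 (Suc i) (Suc j) = Suc (if le2 i j then j else i)"
  unfolding mx_def by (simp add: L2_simps)

lemma TK_cases: "u \<in> TK \<longleftrightarrow> u = (0,0) \<or> (\<exists>i j. u = (Suc i, Suc j) \<and> j \<le> i \<and> le2 i j)"
  unfolding TK_def by auto

lemma jclosed_TK: "jclosed LE1 L2 TK"
  unfolding jclosed_def
proof (intro ballI)
  fix u v assume u: "u \<in> TK" and v: "v \<in> TK"
  show "pj LE1 L2 u v \<in> TK"
  proof (cases "u = (0,0)")
    case True thus ?thesis using v by (simp add: pj_def mx_LE1 mx_L2_0)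
  next
    case False
    then obtain i j where u': "u = (Suc i, Suc j)" "j \<le> i" "le2 i j" using u TK_cases by blast
    show ?thesis
    proof (cases "v = (0,0)")
      case True thus ?thesis using u by (simp add: pj_def mx_LE1 mx_L2_0)
    next
      case False
      then obtain i' j' where v': "v = (Suc i', Suc j')" "j' \<le> i'" "le2 i' j'" using v TK_cases by blast
      define m where "m = (if le2 j j' then j' else j)"
      have pj: "pj LE1 L2 u v = (Suc (max i i'), Suc m)"
        using u' v' by (simp add: pj_def mx_LE1 mx_L2_S m_def)
      have "m \<le> max i i'" unfolding m_def using u' v' by auto
      moreover have "le2 j m" "le2 j' m" unfolding m_def using le2_refl le2_total by auto
      hence "le2 (max i i') m" using u' v' le2_trans by (cases "i \<le> i'") (auto simp: max_def)
      ultimately show ?thesis unfolding pj TK_cases by auto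
    qed
  qed
qed

abbreviation cl where "cl A \<equiv> bichain_closure X q1 q2 A"

lemma cl_least: "bichain_closed X q1 q2 C \<Longrightarrow> A \<subseteq> C \<Longrightarrow> cl A \<subseteq> C"
  unfolding bichain_closure_def by blast
lemma cl_ext: "A \<subseteq> cl A"
  unfolding bichain_closure_def by blast

lemma closed_D: "a \<in> X \<Longrightarrow> b \<in> X \<Longrightarrow> bichain_closed X q1 q2 (D a b)"
  unfolding bichain_closed_def
proof (intro exI conjI)
  show "initial_segment X q1 {y \<in> X. (y, a) \<in> q1}" unfolding initial_segment_def
    using chain_trans[OF c1] by blast
  show "initial_segment X q2 {y \<in> X. (y, b) \<in> q2}" unfolding initial_segment_def
    using chain_trans[OF c2] by blast
  show "D a b = {y \<in> X. (y, a) \<in> q1} \<inter> {y \<in> X. (y, b) \<in> q2}" unfolding D_def by blast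
qed

lemma closed_empty: "bichain_closed X q1 q2 {}"
  unfolding bichain_closed_def initial_segment_def by blast

lemma cl_empty: "cl {} = {}" using cl_least[OF closed_empty] by blast

lemma cl_closed: "bichain_closed X q1 q2 C \<Longrightarrow> cl C = C"
  using cl_least[of C C] cl_ext[of C] by blast

lemma D_sub: "D (g i) (g j) \<subseteq> g ` {..i}"
proof
  fix y assume "y \<in> D (g i) (g j)"
  hence "y \<in> X" "(y, g i) \<in> q1" unfolding D_def by auto
  then obtain m where "y = g m" using g_surj by blast
  with \<open>(y, g i) \<in> q1\<close> show "y \<in> g ` {..i}" using gord by auto
qed

lemma D_finite: "finite (D (g i) (g j))"
  using D_sub finite_subset by blast

lemma D_mem: "g m \<in> D (g i) (g j) \<longleftrightarrow> m \<le> i \<and> le2 m j"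
  unfolding D_def le2_def using g_in gord by auto

lemma kappa_compact: "u \<in> TK \<Longrightarrow> \<kappa> u \<in> compacts X q1 q2"
proof -
  assume u: "u \<in> TK"
  show ?thesis
  proof (cases "fst u = 0")
    case True
    hence "\<kappa> u = cl {}" unfolding \<kappa>_def using cl_empty by simp
    thus ?thesis unfolding compacts_def by blast
  next
    case False
    define A where "A = D (g (fst u - 1)) (g (snd u - 1))"
    have "\<kappa> u = A" unfolding \<kappa>_def A_def using False by simp
    moreover have "cl A = A" unfolding A_def by (rule cl_closed, rule closed_D, simp_all add: g_in)
    moreover have "finite A" "A \<subseteq> X" unfolding A_def using D_finite by (auto simp: D_def)
    ultimately show ?thesis unfolding compacts_def by (metis (mono_tags, lifting) mem_Collect_eq)
  qed
qed

lemma kappa_S: "\<kappa> (Suc i, Suc j) = D (g i) (g j)" unfolding \<kappa>_def by simp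
lemma kappa_0: "\<kappa> (0,0) = {}" unfolding \<kappa>_def by simp

lemma kappa_ord: "u \<in> TK \<Longrightarrow> v \<in> TK \<Longrightarrow> \<kappa> u \<subseteq> \<kappa> v \<longleftrightarrow> (u,v) \<in> prod_order LE1 L2"
proof -
  assume u: "u \<in> TK" and v: "v \<in> TK"
  show ?thesis
  proof (cases "u = (0,0)")
    case True thus ?thesis by (cases v) (simp add: kappa_0 prod_order_iff LE1_def L2_simps)
  next
    case False
    then obtain i j where u': "u = (Suc i, Suc j)" "j \<le> i" "le2 i j" using u TK_cases by blast
    have gi: "g i \<in> \<kappa> u" "g j \<in> \<kappa> u" using u' by (auto simp: kappa_S D_mem le2_refl)
    show ?thesis
    proof (cases "v = (0,0)")
      case True thus ?thesis using gi u' by (auto simp: kappa_0 prod_order_iff LE1_def)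
    next
      case False
      then obtain i' j' where v': "v = (Suc i', Suc j')" "j' \<le> i'" "le2 i' j'" using v TK_cases by blast
      show ?thesis
      proof
        assume "\<kappa> u \<subseteq> \<kappa> v"
        hence "g i \<in> \<kappa> v" "g j \<in> \<kappa> v" using gi by auto
        hence "i \<le> i'" "le2 j j'" using v' by (auto simp: kappa_S D_mem)
        thus "(u,v) \<in> prod_order LE1 L2" using u' v' by (simp add: prod_order_iff LE1_def L2_simps)
      next
        assume "(u,v) \<in> prod_order LE1 L2"
        hence o: "(g i, g i') \<in> q1" "(g j, g j') \<in> q2" using u' v'
          by (auto simp: prod_order_iff LE1_def L2_simps gord le2_def)
        show "\<kappa> u \<subseteq> \<kappa> v" unfolding u' v' kappa_S D_def
          using o chain_trans[OF c1] chain_trans[OF c2] by blast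
      qed
    qed
  qed
qed

lemma kappa_surj: "C \<in> compacts X q1 q2 \<Longrightarrow> \<exists>u\<in>TK. C = \<kappa> u"
proof -
  assume "C \<in> compacts X q1 q2"
  then obtain F where F: "C = cl F" "finite F" "F \<subseteq> X" unfolding compacts_def by blast
  show ?thesis
  proof (cases "F = {}")
    case True
    thus ?thesis using F cl_empty kappa_0 by (auto simp: TK_def)
  next
    case False
    define I where "I = inv g ` F"
    have gI: "g ` I = F" unfolding I_def using F(3) g_surj
      by (auto simp: image_iff) (metis bij_betw_inv_into_right gbij subsetD)+
    have finI: "finite I" "I \<noteq> {}" unfolding I_def using F False by auto
    define a where "a = Max I"
    have aI: "a \<in> I" "\<And>m. m \<in> I \<Longrightarrow> m \<le> a" unfolding a_def using finI by auto
    have "\<exists>b\<in>I. \<forall>l\<in>I. l = b \<or> (le2 l b \<and> l \<noteq> b)"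
      apply (rule finite_max_lt[OF finI subset_UNIV, where lt="\<lambda>x y. le2 x y \<and> x \<noteq> y"])
       apply (blast intro: le2_trans le2_antisym)
      using le2_total by blast
    then obtain b where b1: "b \<in> I" and b2: "\<forall>l\<in>I. l = b \<or> (le2 l b \<and> l \<noteq> b)" by blast
    have bI: "b \<in> I" "\<And>m. m \<in> I \<Longrightarrow> le2 m b" using b1 b2 le2_refl by auto
    have TKab: "(Suc a, Suc b) \<in> TK" using aI bI unfolding TK_def by blast
    have "C = D (g a) (g b)"
    proof
      have "bichain_closed X q1 q2 (D (g a) (g b))" by (rule closed_D; simp add: g_in)
      moreover have "F \<subseteq> D (g a) (g b)" using aI bI unfolding gI[symmetric] by (auto simp: D_mem)
      ultimately show "C \<subseteq> D (g a) (g b)" using F cl_least by blast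
    next
      show "D (g a) (g b) \<subseteq> C"
      proof
        fix y assume y: "y \<in> D (g a) (g b)"
        show "y \<in> C" unfolding F(1) bichain_closure_def
        proof
          fix K assume "K \<in> {C. bichain_closed X q1 q2 C \<and> F \<subseteq> C}"
          then obtain I1 I2 where K: "initial_segment X q1 I1" "initial_segment X q2 I2" "K = I1 \<inter> I2" "F \<subseteq> K"
            unfolding bichain_closed_def by blast
          have "g a \<in> I1" "g b \<in> I2" using K aI bI gI by auto
          thus "y \<in> K" using y K unfolding D_def initial_segment_def by blast
        qed
      qed
    qed
    thus ?thesis using TKab kappa_S by blast
  qed
qed

lemma TK_iso: "order_isomorphic TK (restr (prod_order LE1 L2) TK) (compacts X q1 q2) (compacts_order X q1 q2)"
  unfolding order_isomorphic_def
proof (intro exI conjI ballI)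
  have inj: "inj_on \<kappa> TK"
  proof (rule inj_onI)
    fix u v assume u: "u \<in> TK" and v: "v \<in> TK" and e: "\<kappa> u = \<kappa> v"
    hence "(u,v) \<in> prod_order LE1 L2" "(v,u) \<in> prod_order LE1 L2" using kappa_ord[OF u v] kappa_ord[OF v u] by auto
    thus "u = v" using prod_antisym[OF chain_LE1 chain_L2] by blast
  qed
  show "bij_betw \<kappa> TK (compacts X q1 q2)" unfolding bij_betw_def
    using inj kappa_compact kappa_surj by blast
  fix u v assume u: "u \<in> TK" and v: "v \<in> TK"
  show "(u, v) \<in> restr (prod_order LE1 L2) TK \<longleftrightarrow> (\<kappa> u, \<kappa> v) \<in> compacts_order X q1 q2"
    unfolding restr_def compacts_order_def using u v kappa_ord kappa_compact by auto
qed

end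


lemma not_scattered_from:
  fixes H :: "rat \<Rightarrow> 'a"
  assumes c: "chain_on Y R" and AY: "A \<subseteq> Y" and HA: "\<And>p. H p \<in> A"
    and Hlt: "\<And>p q. p < q \<Longrightarrow> (H p, H q) \<in> R \<and> H p \<noteq> H q"
  shows "\<not> order_scattered A (restr R A)"
proof -
  have r: "range H \<subseteq> A" using HA by blast
  have i: "inj H"
  proof (rule injI)
    fix p q :: rat assume e: "H p = H q"
    show "p = q"
    proof (rule ccontr)
      assume "p \<noteq> q"
      hence "p < q \<or> q < p" by auto
      thus False using Hlt e by metis
    qed
  qed
  have o: "\<forall>p q. p \<le> q \<longleftrightarrow> (H p, H q) \<in> restr R A"
  proof (intro allI iffI)
    fix p q :: rat assume "p \<le> q"
    hence "(H p, H q) \<in> R"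
      using Hlt[of p q] chain_refl[OF c, of "H p"] HA AY by (cases "p = q") auto
    thus "(H p, H q) \<in> restr R A" unfolding restr_def using HA by auto
  next
    fix p q :: rat assume a: "(H p, H q) \<in> restr R A"
    show "p \<le> q"
    proof (rule ccontr)
      assume "\<not> p \<le> q"
      hence "q < p" by simp
      hence "(H q, H p) \<in> R" "H q \<noteq> H p" using Hlt by auto
      moreover have "(H p, H q) \<in> R" using a unfolding restr_def by simp
      ultimately show False using chain_antisym[OF c] by metis
    qed
  qed
  show ?thesis unfolding order_scattered_def using r i o by blast
qed

locale bichQ = bich +
  fixes h :: "rat \<Rightarrow> 'a"
  assumes hX: "\<And>p. h p \<in> X" and hord: "\<And>p q. p \<le> q \<longleftrightarrow> (h p, h q) \<in> q2"
begin

definition hq :: "rat \<Rightarrow> nat" where "hq p = inv g (h p)"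

lemma g_hq: "g (hq p) = h p"
  unfolding hq_def using hX gbij by (simp add: bij_betw_inv_into_right)

lemma hq_ord: "p \<le> q \<longleftrightarrow> le2 (hq p) (hq q)"
  unfolding le2_def g_hq using hord .

lemma hq_inj: "inj hq"
proof (rule injI)
  fix p q assume "hq p = hq q"
  hence "le2 (hq p) (hq q)" "le2 (hq q) (hq p)" using le2_refl by auto
  thus "p = q" using hq_ord by (meson order_antisym)
qed

lemma hq_lt: "p < q \<Longrightarrow> le2 (hq p) (hq q) \<and> hq p \<noteq> hq q"
  using hq_ord hq_inj by (metis inj_eq less_imp_le order_less_irrefl)

lemma big:
  assumes fin: "\<And>N. finite {x. \<alpha> x \<le> (N::nat)}" and pq: "p < q"
  shows "\<exists>r. p < r \<and> r < q \<and> N < hq r \<and> N < \<alpha> (hq r)"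
proof -
  have inf: "infinite (hq ` {p<..<q})"
    using pq hq_inj by (simp add: finite_image_iff inj_on_subset[OF hq_inj])
  have "finite ({..N} \<union> {x. \<alpha> x \<le> N})" using fin by simp
  then obtain x where x: "x \<in> hq ` {p<..<q}" "x \<notin> {..N} \<union> {x. \<alpha> x \<le> N}"
    using inf by (meson finite_subset subsetI)
  thus ?thesis by auto
qed


definition ltL :: "nat \<Rightarrow> nat \<Rightarrow> bool" where "ltL a b \<longleftrightarrow> (a,b) \<in> L2 \<and> a \<noteq> b"

lemma ltL_trans: "ltL a b \<Longrightarrow> ltL b c \<Longrightarrow> ltL a c"
  unfolding ltL_def using chain_trans[OF chain_L2] chain_antisym[OF chain_L2] by blast
lemma ltL_irr: "\<not> ltL a a" unfolding ltL_def by simp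
lemma ltL_tot: "a \<noteq> b \<Longrightarrow> ltL a b \<or> ltL b a"
  unfolding ltL_def using chain_total[OF chain_L2] by blast
lemma L2_ltL: "(a,b) \<in> L2 \<Longrightarrow> ltL b c \<Longrightarrow> ltL a c"
  unfolding ltL_def using chain_trans[OF chain_L2] chain_antisym[OF chain_L2] by blast
lemma ltL_L2: "ltL a b \<Longrightarrow> (b,c) \<in> L2 \<Longrightarrow> ltL a c"
  unfolding ltL_def using chain_trans[OF chain_L2] chain_antisym[OF chain_L2] by blast

lemma TK_snd_le: "u \<in> TK \<Longrightarrow> snd u \<le> fst u"
  unfolding TK_cases by auto

lemma lemmaL:
  assumes phiT: "\<And>u. u \<in> TK \<Longrightarrow> \<phi> u \<in> TK" and phiinj: "inj_on \<phi> TK"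
    and phihom: "\<And>u v. u \<in> TK \<Longrightarrow> v \<in> TK \<Longrightarrow> \<phi> (pj LE1 L2 u v) = pj LE1 L2 (\<phi> u) (\<phi> v)"
  shows "\<exists>H :: rat \<Rightarrow> nat. (\<forall>p. H p \<in> snd ` \<phi> ` TK) \<and> (\<forall>p q. p < q \<longrightarrow> ltL (H p) (H q))"
proof -
  define u where "u x = (Suc x, Suc x)" for x
  have uT: "u x \<in> TK" for x unfolding u_def TK_def using le2_refl by auto
  define \<alpha> where "\<alpha> x = fst (\<phi> (u x))" for x
  define \<beta> where "\<beta> x = snd (\<phi> (u x))" for x
  have phiu: "\<phi> (u x) = (\<alpha> x, \<beta> x)" for x unfolding \<alpha>_def \<beta>_def by simp
  have pu_inj: "inj (\<lambda>x. \<phi> (u x))"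
  proof (rule injI)
    fix x y assume "\<phi> (u x) = \<phi> (u y)"
    hence "u x = u y" using phiinj uT by (meson inj_onD)
    thus "x = y" unfolding u_def by simp
  qed
  have fin: "finite {x. \<alpha> x \<le> N}" for N
  proof -
    have "{x. \<alpha> x \<le> N} \<subseteq> (\<lambda>x. \<phi> (u x)) -` ({..N} \<times> {..N})"
    proof
      fix x assume "x \<in> {x. \<alpha> x \<le> N}"
      moreover have "\<beta> x \<le> \<alpha> x" using TK_snd_le[OF phiT[OF uT]] phiu by (metis fst_conv snd_conv)
      ultimately show "x \<in> (\<lambda>x. \<phi> (u x)) -` ({..N} \<times> {..N})" using phiu by auto
    qed
    moreover have "finite ((\<lambda>x. \<phi> (u x)) -` ({..N} \<times> {..N}))"
      by (rule finite_vimageI[OF _ pu_inj]) simp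
    ultimately show ?thesis using finite_subset by blast
  qed
  have M: "(\<beta> x, \<beta> y) \<in> L2" if "x \<le> y" "le2 x y" for x y
  proof -
    have "pj LE1 L2 (u x) (u y) = u y" using that unfolding u_def
      by (simp add: pj_def mx_LE1 mx_L2_S max_def)
    hence "\<phi> (u y) = pj LE1 L2 (\<phi> (u x)) (\<phi> (u y))" using phihom[OF uT uT, of x y] by simp
    moreover have "(\<phi> (u x), pj LE1 L2 (\<phi> (u x)) (\<phi> (u y))) \<in> prod_order LE1 L2"
      by (rule pj_ub1[OF chain_LE1 chain_L2]) simp_all
    ultimately show ?thesis using phiu[of x] phiu[of y] by (simp add: prod_order_iff)
  qed
  have I: "(\<alpha> x < \<alpha> y \<and> ltL (\<beta> y) (\<beta> x)) \<or> (\<alpha> y < \<alpha> x \<and> ltL (\<beta> x) (\<beta> y))"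
    if "y < x" "le2 x y" for x y
  proof -
    define w where "w = (Suc x, Suc y)"
    have wT: "w \<in> TK" unfolding w_def TK_def using that by auto
    have pw: "pj LE1 L2 (u x) (u y) = w" using that unfolding u_def w_def
      by (simp add: pj_def mx_LE1 mx_L2_S max_def)
    have "w \<noteq> u x" "w \<noteq> u y" using that unfolding u_def w_def by auto
    hence ne: "\<phi> w \<noteq> \<phi> (u x)" "\<phi> w \<noteq> \<phi> (u y)" using inj_onD[OF phiinj _ wT uT] by blast+
    have pw': "\<phi> w = (max (\<alpha> x) (\<alpha> y), mx L2 (\<beta> x) (\<beta> y))"
      using phihom[OF uT uT, of x y] pw phiu by (simp add: pj_def mx_LE1)
    have n1: "\<not> (\<alpha> x \<le> \<alpha> y \<and> (\<beta> x, \<beta> y) \<in> L2)"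
    proof
      assume a: "\<alpha> x \<le> \<alpha> y \<and> (\<beta> x, \<beta> y) \<in> L2"
      hence "\<phi> w = \<phi> (u y)" using pw' phiu by (simp add: mx_eq2 max_def)
      thus False using ne by simp
    qed
    have n2: "\<not> (\<alpha> y \<le> \<alpha> x \<and> (\<beta> y, \<beta> x) \<in> L2)"
    proof
      assume a: "\<alpha> y \<le> \<alpha> x \<and> (\<beta> y, \<beta> x) \<in> L2"
      hence "mx L2 (\<beta> x) (\<beta> y) = \<beta> x" using mx_eq1[OF chain_L2] by blast
      hence "\<phi> w = \<phi> (u x)" using pw' phiu a by (simp add: max_def)
      thus False using ne by simp
    qed
    show ?thesis
    proof (cases "\<alpha> x \<le> \<alpha> y")
      case True
      hence "(\<beta> x, \<beta> y) \<notin> L2" using n1 by blast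
      hence "(\<beta> y, \<beta> x) \<in> L2" "\<beta> y \<noteq> \<beta> x" using chain_total[OF chain_L2, of "\<beta> x" "\<beta> y"]
        chain_refl[OF chain_L2, of "\<beta> x"] by auto
      moreover hence "\<alpha> x \<noteq> \<alpha> y" using n2 by auto
      ultimately show ?thesis using True unfolding ltL_def by auto
    next
      case False
      hence "(\<beta> y, \<beta> x) \<notin> L2" using n2 by auto
      hence "(\<beta> x, \<beta> y) \<in> L2" "\<beta> y \<noteq> \<beta> x" using chain_total[OF chain_L2, of "\<beta> x" "\<beta> y"]
        chain_refl[OF chain_L2, of "\<beta> x"] by auto
      thus ?thesis using False unfolding ltL_def by auto
    qed
  qed
  have bg: "\<exists>r. p < r \<and> r < q \<and> N < hq r \<and> N < \<alpha> (hq r)" if "p < q" for p q N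
    using big[OF fin that] .
  have order: "p < p'" if "ltL (\<beta> (hq p)) (\<beta> (hq p'))" for p p'
  proof (rule ccontr)
    assume "\<not> p < p'"
    hence "p' < p \<or> p = p'" by auto
    moreover have "p \<noteq> p'" using that ltL_irr by auto
    ultimately have pp: "p' < p" by simp
    let ?x = "hq p" and ?z = "hq p'"
    obtain r where r: "p' < r" "r < p" "max ?x ?z < hq r" "\<alpha> ?x < \<alpha> (hq r)"
      using bg[OF pp, of "max (max ?x ?z) (\<alpha> ?x)"] by auto
    let ?y = "hq r"
    have "le2 ?y ?x" "?x < ?y" using hq_lt[of r p] r by auto
    hence "(\<alpha> ?y < \<alpha> ?x \<and> ltL (\<beta> ?x) (\<beta> ?y)) \<or> (\<alpha> ?x < \<alpha> ?y \<and> ltL (\<beta> ?y) (\<beta> ?x))"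
      using I[of ?x ?y] by blast
    hence "ltL (\<beta> ?y) (\<beta> ?x)" using r(4) by auto
    moreover have "(\<beta> ?z, \<beta> ?y) \<in> L2" using M[of ?z ?y] hq_lt[of p' r] r by auto
    ultimately have "ltL (\<beta> ?z) (\<beta> ?x)" using L2_ltL by metis
    hence "ltL (\<beta> ?z) (\<beta> ?z)" using that by (rule ltL_trans)
    thus False using ltL_irr by blast
  qed
  have dense: "\<exists>c\<in>range hq. ltL (\<beta> a) (\<beta> c) \<and> ltL (\<beta> c) (\<beta> b)"
    if ab: "a \<in> range hq" "b \<in> range hq" "ltL (\<beta> a) (\<beta> b)" for a b
  proof -
    obtain p p' where a: "a = hq p" and b: "b = hq p'" using ab by blast
    have pp: "p < p'" using order[of p p'] ab(3) unfolding a b by blast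
    obtain r2 where r2: "p < r2" "r2 < p'" "max a b < hq r2" "\<alpha> b < \<alpha> (hq r2)"
      using bg[OF pp, of "max (max a b) (\<alpha> b)"] by auto
    obtain r1 where r1: "p < r1" "r1 < r2" "hq r2 < hq r1" "\<alpha> (hq r2) < \<alpha> (hq r1)"
      using bg[OF r2(1), of "max (hq r2) (\<alpha> (hq r2))"] by auto
    let ?y1 = "hq r1" and ?y2 = "hq r2"
    have "le2 ?y2 b" using hq_lt[of r2 p'] r2 b by auto
    moreover have "b < ?y2" using r2 by simp
    ultimately have "(\<alpha> ?y2 < \<alpha> b \<and> ltL (\<beta> b) (\<beta> ?y2)) \<or> (\<alpha> b < \<alpha> ?y2 \<and> ltL (\<beta> ?y2) (\<beta> b))"
      using I[of b ?y2] by blast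
    hence A: "ltL (\<beta> ?y2) (\<beta> b)" using r2(4) by auto
    have "le2 ?y1 ?y2" using hq_lt[of r1 r2] r1 by auto
    moreover have "?y2 < ?y1" using r1 by simp
    ultimately have "(\<alpha> ?y1 < \<alpha> ?y2 \<and> ltL (\<beta> ?y2) (\<beta> ?y1)) \<or> (\<alpha> ?y2 < \<alpha> ?y1 \<and> ltL (\<beta> ?y1) (\<beta> ?y2))"
      using I[of ?y2 ?y1] by blast
    hence B: "ltL (\<beta> ?y1) (\<beta> ?y2)" using r1(4) by auto
    have "le2 a ?y1" using hq_lt[of p r1] r1 a by auto
    moreover have "a \<le> ?y1" using r1 r2 by simp
    ultimately have C: "(\<beta> a, \<beta> ?y1) \<in> L2" using M by blast
    have "ltL (\<beta> a) (\<beta> ?y2)" using C B by (rule L2_ltL)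
    thus ?thesis using A by blast
  qed
  obtain r where r: "0 < r" "r < 1" "hq 1 < hq r" "\<alpha> (hq 1) < \<alpha> (hq r)"
    using bg[of 0 1 "max (hq 1) (\<alpha> (hq 1))"] by auto
  have "le2 (hq r) (hq 1)" using hq_lt[of r 1] r by auto
  moreover have "hq 1 < hq r" using r by simp
  ultimately have "(\<alpha> (hq r) < \<alpha> (hq 1) \<and> ltL (\<beta> (hq 1)) (\<beta> (hq r))) \<or> (\<alpha> (hq 1) < \<alpha> (hq r) \<and> ltL (\<beta> (hq r)) (\<beta> (hq 1)))"
    using I[of "hq 1" "hq r"] by blast
  hence lohi: "ltL (\<beta> (hq r)) (\<beta> (hq 1))" using r(4) by auto
  have ex: "\<exists>h'::rat \<Rightarrow> nat. (\<forall>p. h' p \<in> range hq) \<and> (\<forall>p q. p < q \<longrightarrow> ltL (\<beta> (h' p)) (\<beta> (h' q)))"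
  proof (rule dense_Q_copy[where lt=ltL and key=\<beta> and E="range hq" and lo="hq r" and hi="hq 1"])
    show "\<And>a b c. ltL a b \<Longrightarrow> ltL b c \<Longrightarrow> ltL a c" by (rule ltL_trans)
    show "\<And>a. \<not> ltL a a" by (rule ltL_irr)
    show "\<And>a b. a \<noteq> b \<Longrightarrow> ltL a b \<or> ltL b a" by (rule ltL_tot)
    show "hq r \<in> range hq" "hq 1 \<in> range hq" by simp_all
    show "ltL (\<beta> (hq r)) (\<beta> (hq 1))" by (rule lohi)
    show "\<And>a b. a \<in> range hq \<Longrightarrow> b \<in> range hq \<Longrightarrow> ltL (\<beta> a) (\<beta> b) \<Longrightarrow>
        \<exists>c\<in>range hq. ltL (\<beta> a) (\<beta> c) \<and> ltL (\<beta> c) (\<beta> b)" by (rule dense)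
  qed
  then obtain h' :: "rat \<Rightarrow> nat" where h': "\<forall>p q. p < q \<longrightarrow> ltL (\<beta> (h' p)) (\<beta> (h' q))" by blast
  have "\<beta> (h' p) \<in> snd ` \<phi> ` TK" for p
  proof -
    have "\<phi> (u (h' p)) \<in> \<phi> ` TK" using uT by blast
    thus ?thesis unfolding \<beta>_def by blast
  qed
  thus ?thesis using h' by (intro exI[of _ "\<lambda>p. \<beta> (h' p)"]) blast
qed

end


lemma mp_mem: "inj \<iota> \<Longrightarrow> ((\<iota> a, \<iota> b) \<in> map_prod \<iota> \<iota> ` t) = ((a,b) \<in> t)"
  by (auto simp: inj_eq)

lemma chain_transfer:
  assumes c: "chain_on Y t" and i: "inj \<iota>"
  shows "chain_on (\<iota> ` Y) (map_prod \<iota> \<iota> ` t)"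
proof (rule chain_onI)
  show "map_prod \<iota> \<iota> ` t \<subseteq> \<iota> ` Y \<times> \<iota> ` Y" using c unfolding chain_on_def by auto
next
  fix a assume "a \<in> \<iota> ` Y"
  then obtain y where "y \<in> Y" "a = \<iota> y" by blast
  thus "(a,a) \<in> map_prod \<iota> \<iota> ` t" using chain_refl[OF c] mp_mem[OF i] by auto
next
  fix a b c' assume ab: "(a,b) \<in> map_prod \<iota> \<iota> ` t" and bc: "(b,c') \<in> map_prod \<iota> \<iota> ` t"
  then obtain x y y' z where "(x,y) \<in> t" "(y',z) \<in> t" "a = \<iota> x" "b = \<iota> y" "b = \<iota> y'" "c' = \<iota> z" by auto
  moreover hence "y = y'" using i by (auto dest: injD)
  ultimately show "(a,c') \<in> map_prod \<iota> \<iota> ` t" using chain_trans[OF c] by auto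
next
  fix a b assume ab: "(a,b) \<in> map_prod \<iota> \<iota> ` t" and ba: "(b,a) \<in> map_prod \<iota> \<iota> ` t"
  then obtain x y where xy: "(x,y) \<in> t" "a = \<iota> x" "b = \<iota> y" by auto
  hence "(y,x) \<in> t" using ba mp_mem[OF i] by auto
  thus "a = b" using xy chain_antisym[OF c] by auto
next
  fix a b assume "a \<in> \<iota> ` Y" "b \<in> \<iota> ` Y"
  then obtain x y where "x \<in> Y" "y \<in> Y" "a = \<iota> x" "b = \<iota> y" by blast
  thus "(a,b) \<in> map_prod \<iota> \<iota> ` t \<or> (b,a) \<in> map_prod \<iota> \<iota> ` t" using chain_total[OF c] by auto
qed

lemma transfer_rep:
  fixes \<iota>1 :: "'b \<Rightarrow> 'b2" and \<iota>2 :: "'c \<Rightarrow> 'c2"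
  assumes rep: "chain_product_rep S s Y1 t1 Y2 t2 e" and i1: "inj \<iota>1" and i2: "inj \<iota>2"
  shows "chain_product_rep S s (\<iota>1 ` Y1) (map_prod \<iota>1 \<iota>1 ` t1) (\<iota>2 ` Y2) (map_prod \<iota>2 \<iota>2 ` t2)
           (map_prod \<iota>1 \<iota>2 \<circ> e)"
proof -
  define M where "M = map_prod \<iota>1 \<iota>2"
  have c1: "chain_on Y1 t1" and c2: "chain_on Y2 t2"
    and je: "join_embedding S s (Y1 \<times> Y2) (prod_order t1 t2) e"
    using rep unfolding chain_product_rep_def by auto
  define T where "T = e ` S"
  define A1 where "A1 = fst ` T"
  define A2 where "A2 = snd ` T"
  have ot: "order_type_omega A1 (restr t1 A1)" and ns: "\<not> order_scattered A2 (restr t2 A2)"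
    and fib: "\<And>x. x \<in> A1 \<Longrightarrow> finite (({x} \<times> A2) \<inter> T)"
    using rep unfolding chain_product_rep_def T_def A1_def A2_def Let_def by auto
  have Minj: "inj M" unfolding M_def using i1 i2 by (auto simp: inj_def)
  have bijM: "bij_betw M (Y1 \<times> Y2) (\<iota>1 ` Y1 \<times> \<iota>2 ` Y2)"
    unfolding bij_betw_def M_def using Minj[unfolded M_def] by (auto simp: inj_on_def map_prod_surj_on)
  have ordM: "\<And>u v. u \<in> Y1 \<times> Y2 \<Longrightarrow> v \<in> Y1 \<times> Y2 \<Longrightarrow>
      (u,v) \<in> prod_order t1 t2 \<longleftrightarrow> (M u, M v) \<in> prod_order (map_prod \<iota>1 \<iota>1 ` t1) (map_prod \<iota>2 \<iota>2 ` t2)"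
    unfolding M_def by (auto simp: prod_order_iff mp_mem[OF i1] mp_mem[OF i2])
  have je': "join_embedding S s (\<iota>1 ` Y1 \<times> \<iota>2 ` Y2)
      (prod_order (map_prod \<iota>1 \<iota>1 ` t1) (map_prod \<iota>2 \<iota>2 ` t2)) (M \<circ> e)"
    by (rule jemb_comp[OF je iso_jemb(1)[OF bijM ordM]])
  have T': "(M \<circ> e) ` S = M ` T" unfolding T_def by auto
  have A1': "fst ` M ` T = \<iota>1 ` A1" unfolding A1_def M_def by (simp add: image_image)
  have A2': "snd ` M ` T = \<iota>2 ` A2" unfolding A2_def M_def by (simp add: image_image)
  have ot': "order_type_omega (\<iota>1 ` A1) (restr (map_prod \<iota>1 \<iota>1 ` t1) (\<iota>1 ` A1))"
  proof -
    obtain \<gamma> :: "nat \<Rightarrow> 'b" where g: "bij_betw \<gamma> UNIV A1" "\<forall>m n. (\<gamma> m, \<gamma> n) \<in> restr t1 A1 \<longleftrightarrow> m \<le> n"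
      using ot unfolding order_type_omega_def by (elim exE conjE) blast
    have "bij_betw (\<iota>1 \<circ> \<gamma>) UNIV (\<iota>1 ` A1)"
    proof (rule bij_betw_trans[OF g(1)])
      show "bij_betw \<iota>1 A1 (\<iota>1 ` A1)" using i1 by (simp add: bij_betw_imageI inj_on_subset)
    qed
    moreover have "\<forall>m n. ((\<iota>1 \<circ> \<gamma>) m, (\<iota>1 \<circ> \<gamma>) n) \<in> restr (map_prod \<iota>1 \<iota>1 ` t1) (\<iota>1 ` A1) \<longleftrightarrow> m \<le> n"
    proof (intro allI)
      fix m n
      have "\<gamma> m \<in> A1" "\<gamma> n \<in> A1" using g(1) by (auto simp: bij_betw_def)
      hence "((\<iota>1 \<circ> \<gamma>) m, (\<iota>1 \<circ> \<gamma>) n) \<in> restr (map_prod \<iota>1 \<iota>1 ` t1) (\<iota>1 ` A1) \<longleftrightarrow> (\<gamma> m, \<gamma> n) \<in> restr t1 A1"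
        unfolding restr_def using mp_mem[OF i1, of "\<gamma> m" "\<gamma> n" t1] by auto
      thus "((\<iota>1 \<circ> \<gamma>) m, (\<iota>1 \<circ> \<gamma>) n) \<in> restr (map_prod \<iota>1 \<iota>1 ` t1) (\<iota>1 ` A1) \<longleftrightarrow> m \<le> n"
        using g(2) by simp
    qed
    ultimately show ?thesis unfolding order_type_omega_def by (intro exI[of _ "\<iota>1 \<circ> \<gamma>"]) simp
  qed
  have ns': "\<not> order_scattered (\<iota>2 ` A2) (restr (map_prod \<iota>2 \<iota>2 ` t2) (\<iota>2 ` A2))"
  proof -
    obtain H :: "rat \<Rightarrow> 'c" where H: "range H \<subseteq> A2" "inj H" "\<forall>p q. p \<le> q \<longleftrightarrow> (H p, H q) \<in> restr t2 A2"
      using ns unfolding order_scattered_def by blast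
    have "range (\<iota>2 \<circ> H) \<subseteq> \<iota>2 ` A2" using H by auto
    moreover have "inj (\<iota>2 \<circ> H)" using H i2 by (simp add: inj_compose)
    moreover have "\<forall>p q. p \<le> q \<longleftrightarrow> ((\<iota>2 \<circ> H) p, (\<iota>2 \<circ> H) q) \<in> restr (map_prod \<iota>2 \<iota>2 ` t2) (\<iota>2 ` A2)"
    proof (intro allI)
      fix p q
      have "H p \<in> A2" "H q \<in> A2" using H(1) by auto
      hence "((\<iota>2 \<circ> H) p, (\<iota>2 \<circ> H) q) \<in> restr (map_prod \<iota>2 \<iota>2 ` t2) (\<iota>2 ` A2) \<longleftrightarrow> (H p, H q) \<in> restr t2 A2"
        unfolding restr_def using mp_mem[OF i2, of "H p" "H q" t2] by auto
      thus "p \<le> q \<longleftrightarrow> ((\<iota>2 \<circ> H) p, (\<iota>2 \<circ> H) q) \<in> restr (map_prod \<iota>2 \<iota>2 ` t2) (\<iota>2 ` A2)"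
        using H(3) by simp
    qed
    ultimately show ?thesis unfolding order_scattered_def by blast
  qed
  have fib': "\<And>x. x \<in> \<iota>1 ` A1 \<Longrightarrow> finite (({x} \<times> \<iota>2 ` A2) \<inter> M ` T)"
  proof -
    fix x assume "x \<in> \<iota>1 ` A1"
    then obtain y where y: "y \<in> A1" "x = \<iota>1 y" by blast
    have "({x} \<times> \<iota>2 ` A2) \<inter> M ` T \<subseteq> M ` (({y} \<times> A2) \<inter> T)"
    proof
      fix z assume z: "z \<in> ({x} \<times> \<iota>2 ` A2) \<inter> M ` T"
      then obtain t where t: "t \<in> T" "z = M t" by blast
      have "z \<in> {x} \<times> \<iota>2 ` A2" using z by blast
      hence "fst z = x" by (simp add: mem_Times_iff)
      hence "\<iota>1 (fst t) = \<iota>1 y" using t y(2) unfolding M_def by (cases t) simp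
      hence "fst t = y" using i1 by (simp add: inj_eq)
      moreover have "snd t \<in> A2" using t unfolding A2_def by blast
      ultimately have "t \<in> ({y} \<times> A2) \<inter> T" using t by (cases t) simp
      thus "z \<in> M ` (({y} \<times> A2) \<inter> T)" using t by blast
    qed
    thus "finite (({x} \<times> \<iota>2 ` A2) \<inter> M ` T)" using fib[OF y(1)] finite_subset by blast
  qed
  have fib'': "\<forall>x\<in>fst ` (M \<circ> e) ` S. finite (({x} \<times> snd ` (M \<circ> e) ` S) \<inter> (M \<circ> e) ` S)"
    unfolding T' A1' A2' using fib' by blast
  show ?thesis unfolding chain_product_rep_def Let_def
  proof (intro conjI)
    show "chain_on (\<iota>1 ` Y1) (map_prod \<iota>1 \<iota>1 ` t1)" by (rule chain_transfer[OF c1 i1])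
    show "chain_on (\<iota>2 ` Y2) (map_prod \<iota>2 \<iota>2 ` t2)" by (rule chain_transfer[OF c2 i2])
    show "join_embedding S s (\<iota>1 ` Y1 \<times> \<iota>2 ` Y2) (prod_order (map_prod \<iota>1 \<iota>1 ` t1) (map_prod \<iota>2 \<iota>2 ` t2))
     (map_prod \<iota>1 \<iota>2 \<circ> e)" using je' unfolding M_def .
    show "order_type_omega (fst ` (map_prod \<iota>1 \<iota>2 \<circ> e) ` S) (restr (map_prod \<iota>1 \<iota>1 ` t1) (fst ` (map_prod \<iota>1 \<iota>2 \<circ> e) ` S))"
      using ot' T' A1' unfolding M_def by simp
    show "\<not> order_scattered (snd ` (map_prod \<iota>1 \<iota>2 \<circ> e) ` S) (restr (map_prod \<iota>2 \<iota>2 ` t2) (snd ` (map_prod \<iota>1 \<iota>2 \<circ> e) ` S))"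
      using ns' T' A2' unfolding M_def by simp
    show "\<forall>x\<in>fst ` (map_prod \<iota>1 \<iota>2 \<circ> e) ` S. finite (({x} \<times> snd ` (map_prod \<iota>1 \<iota>2 \<circ> e) ` S) \<inter> (map_prod \<iota>1 \<iota>2 \<circ> e) ` S)"
      using fib'' unfolding M_def .
  qed
qed

context bichQ
begin

lemma TK_infinite: "infinite TK"
proof -
  have "range (\<lambda>x. (Suc x, Suc x)) \<subseteq> TK" unfolding TK_def using le2_refl by auto
  moreover have "infinite (range (\<lambda>x::nat. (Suc x, Suc x)))"
    by (rule range_inj_infinite) (auto simp: inj_def)
  ultimately show ?thesis using finite_subset by blast
qed

lemma dir1:
  assumes e: "join_embedding S s TK (restr (prod_order LE1 L2) TK) e"
    and k: "join_embedding TK (restr (prod_order LE1 L2) TK) S s k"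
  shows "chain_product_rep S s UNIV LE1 UNIV L2 e"
proof -
  have TKsub: "TK \<subseteq> UNIV \<times> UNIV" by simp
  define \<phi> where "\<phi> = e \<circ> k"
  have jphi: "join_embedding TK (restr (prod_order LE1 L2) TK) TK (restr (prod_order LE1 L2) TK) \<phi>"
    unfolding \<phi>_def by (rule jemb_comp[OF k e])
  have phiT: "\<And>u. u \<in> TK \<Longrightarrow> \<phi> u \<in> TK" and phiinj: "inj_on \<phi> TK"
    using jphi unfolding join_embedding_def by auto
  have phihom: "\<phi> (pj LE1 L2 u v) = pj LE1 L2 (\<phi> u) (\<phi> v)" if u: "u \<in> TK" and v: "v \<in> TK" for u v
  proof -
    have pT: "pj LE1 L2 u v \<in> TK" using jclosed_TK u v unfolding jclosed_def by blast
    have "is_join TK (restr (prod_order LE1 L2) TK) u v (pj LE1 L2 u v)"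
      using is_join_closed[OF chain_LE1 chain_L2 TKsub jclosed_TK u v] by simp
    hence "is_join TK (restr (prod_order LE1 L2) TK) (\<phi> u) (\<phi> v) (\<phi> (pj LE1 L2 u v))"
      using jphi u v pT unfolding join_embedding_def by blast
    thus ?thesis using is_join_closed[OF chain_LE1 chain_L2 TKsub jclosed_TK phiT[OF u] phiT[OF v]] by simp
  qed
  obtain H :: "rat \<Rightarrow> nat" where H: "\<forall>p. H p \<in> snd ` \<phi> ` TK" "\<forall>p q. p < q \<longrightarrow> ltL (H p) (H q)"
    using lemmaL[OF phiT phiinj phihom] by blast
  define T where "T = e ` S"
  have eT: "T \<subseteq> TK" using e unfolding join_embedding_def T_def by simp
  have phiTT: "\<phi> ` TK \<subseteq> T" unfolding T_def \<phi>_def using k unfolding join_embedding_def by auto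
  have Tinf: "infinite T"
  proof -
    have "infinite (\<phi> ` TK)" using TK_infinite phiinj finite_imageD by blast
    thus ?thesis using phiTT finite_subset by blast
  qed
  define A1 where "A1 = fst ` T"
  define A2 where "A2 = snd ` T"
  have A1inf: "infinite A1"
  proof
    assume fin: "finite A1"
    have "T \<subseteq> A1 \<times> {..Max A1}"
    proof
      fix t assume t: "t \<in> T"
      hence "snd t \<le> fst t" using eT TK_snd_le by blast
      moreover have "fst t \<in> A1" using t unfolding A1_def by blast
      ultimately show "t \<in> A1 \<times> {..Max A1}" using fin by (cases t) (auto intro: le_trans)
    qed
    thus False using Tinf fin finite_subset by blast
  qed
  have ot: "order_type_omega A1 (restr LE1 A1)"
    unfolding order_type_omega_def
  proof (intro exI conjI allI)
    let ?en = "enumerate A1"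
    have sm: "strict_mono ?en" using A1inf by (rule strict_mono_enumerate)
    show "bij_betw ?en UNIV A1" unfolding bij_betw_def
      using sm range_enumerate[OF A1inf] strict_mono_imp_inj_on by blast
    fix m n
    have "?en m \<in> A1" "?en n \<in> A1" using enumerate_in_set[OF A1inf] by auto
    thus "(?en m, ?en n) \<in> restr LE1 A1 \<longleftrightarrow> m \<le> n"
      unfolding restr_def LE1_def using sm by (auto simp: strict_mono_less_eq)
  qed
  have ns: "\<not> order_scattered A2 (restr L2 A2)"
  proof (rule not_scattered_from[OF chain_L2 subset_UNIV])
    show "\<And>p. H p \<in> A2" using H(1) phiTT unfolding A2_def by blast
    show "\<And>p q. p < q \<Longrightarrow> (H p, H q) \<in> L2 \<and> H p \<noteq> H q" using H(2) unfolding ltL_def by blast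
  qed
  have fib: "\<And>x. x \<in> A1 \<Longrightarrow> finite (({x} \<times> A2) \<inter> T)"
  proof -
    fix x
    have "({x} \<times> A2) \<inter> T \<subseteq> {x} \<times> {..x}" using eT TK_snd_le by fastforce
    thus "finite (({x} \<times> A2) \<inter> T)" using finite_subset by blast
  qed
  have je: "join_embedding S s (UNIV \<times> UNIV) (prod_order LE1 L2) e"
    by (rule jemb_widen[OF chain_LE1 chain_L2 TKsub jclosed_TK e])
  show ?thesis unfolding chain_product_rep_def Let_def
    using chain_LE1 chain_L2 je ot ns fib unfolding T_def A1_def A2_def by blast
qed

end


locale trep =
  fixes X1 :: "'b set" and r1 :: "('b \<times> 'b) set" and X2 :: "'c set" and r2 :: "('c \<times> 'c) set"
    and T :: "('b \<times> 'c) set" and \<gamma> :: "nat \<Rightarrow> 'b" and hA :: "rat \<Rightarrow> 'c"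
  assumes d1: "chain_on X1 r1" and d2: "chain_on X2 r2" and TX: "T \<subseteq> X1 \<times> X2"
    and jcT: "jclosed r1 r2 T"
    and \<gamma>bij: "bij_betw \<gamma> UNIV (fst ` T)" and \<gamma>ord: "\<And>m n. (\<gamma> m, \<gamma> n) \<in> r1 \<longleftrightarrow> m \<le> n"
    and fibT: "\<And>x. x \<in> fst ` T \<Longrightarrow> finite (({x} \<times> snd ` T) \<inter> T)"
    and hA: "\<And>p. hA p \<in> snd ` T" and hAord: "\<And>p q. p \<le> q \<longleftrightarrow> (hA p, hA q) \<in> r2"
begin

definition Fb :: "nat \<Rightarrow> 'c set" where "Fb n = {c. (\<gamma> n, c) \<in> T}"

lemma \<gamma>_in: "\<gamma> n \<in> fst ` T" using \<gamma>bij by (auto simp: bij_betw_def)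
lemma \<gamma>_inj: "\<gamma> m = \<gamma> n \<Longrightarrow> m = n" using \<gamma>bij by (auto simp: bij_betw_def dest: injD)
lemma \<gamma>_surj: "t \<in> T \<Longrightarrow> \<gamma> (inv \<gamma> (fst t)) = fst t"
  using \<gamma>bij by (simp add: bij_betw_inv_into_right)

lemma Fb_finite: "finite (Fb n)"
proof -
  have "Fb n \<subseteq> snd ` (({\<gamma> n} \<times> snd ` T) \<inter> T)"
  proof
    fix c assume "c \<in> Fb n"
    hence t: "(\<gamma> n, c) \<in> T" unfolding Fb_def by simp
    hence "(\<gamma> n, c) \<in> ({\<gamma> n} \<times> snd ` T) \<inter> T" by force
    thus "c \<in> snd ` (({\<gamma> n} \<times> snd ` T) \<inter> T)" by (metis snd_conv image_eqI)
  qed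
  moreover have "finite (snd ` (({\<gamma> n} \<times> snd ` T) \<inter> T))" using fibT[OF \<gamma>_in, of n] by simp
  ultimately show ?thesis using finite_subset by blast
qed

lemma T_eq: "T = (\<Union>n. {\<gamma> n} \<times> Fb n)"
proof
  show "T \<subseteq> (\<Union>n. {\<gamma> n} \<times> Fb n)"
  proof
    fix t assume t: "t \<in> T"
    obtain x c where xc: "t = (x,c)" by (cases t)
    have "\<gamma> (inv \<gamma> x) = x" using \<gamma>_surj[OF t] xc by simp
    hence "t \<in> {\<gamma> (inv \<gamma> x)} \<times> Fb (inv \<gamma> x)" unfolding Fb_def using t xc by simp
    thus "t \<in> (\<Union>n. {\<gamma> n} \<times> Fb n)" by blast
  qed
  show "(\<Union>n. {\<gamma> n} \<times> Fb n) \<subseteq> T" unfolding Fb_def by blast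
qed

lemma T_countable: "countable T"
proof -
  have "countable (\<Union>n. {\<gamma> n} \<times> Fb n)"
    by (rule countable_UN) (auto intro: countable_finite Fb_finite)
  thus ?thesis using T_eq by simp
qed

lemma A2_sub: "snd ` T \<subseteq> X2" using TX by auto

lemma hA_inj: "inj hA"
proof (rule injI)
  fix p q assume "hA p = hA q"
  moreover have "hA p \<in> X2" using hA A2_sub by blast
  ultimately have "(hA p, hA q) \<in> r2" "(hA q, hA p) \<in> r2" using chain_refl[OF d2] by auto
  thus "p = q" using hAord by (meson order_antisym)
qed

lemma A2_infinite: "infinite (snd ` T)"
proof -
  have "range hA \<subseteq> snd ` T" using hA by blast
  moreover have "infinite (range hA)"
  proof
    assume "finite (range hA)"
    hence "finite (UNIV :: rat set)" using hA_inj finite_imageD by blast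
    thus False using infinite_UNIV_char_0 by blast
  qed
  ultimately show ?thesis using finite_subset by blast
qed

lemma mx_\<gamma>: "mx r1 (\<gamma> m) (\<gamma> n) = \<gamma> (max m n)"
  unfolding mx_def using \<gamma>ord by (auto simp: max_def)

lemma pj_T: "pj r1 r2 (\<gamma> m, c) (\<gamma> n, c') = (\<gamma> (max m n), mx r2 c c')"
  unfolding pj_def by (simp add: mx_\<gamma>)

end

locale both = bichQ X q1 q2 g h + trep X1 r1 X2 r2 T \<gamma> hA
  for X :: "'x set" and q1 q2 g h and X1 :: "'b set" and r1 and X2 :: "'c set" and r2 and T \<gamma> hA
begin

lemma rat_dense_setup:
  "\<exists>R. (\<forall>c\<in>snd ` T. \<forall>c'\<in>snd ` T. (c,c') \<in> r2 \<longleftrightarrow> le2 (R c) (R c')) \<and> inj_on R (snd ` T) \<and>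
       (\<forall>c\<in>snd ` T. \<forall>q\<le>0. le2 (hq q) (R c))"
proof -
  define A2 where "A2 = snd ` T"
  have cA: "countable A2" unfolding A2_def using T_countable by simp
  have iA: "infinite A2" unfolding A2_def by (rule A2_infinite)
  define en where "en = from_nat_into A2"
  have bij: "bij_betw en UNIV A2" unfolding en_def using cA iA by (rule bij_betw_from_nat_into)
  have enA: "en i \<in> A2" for i using bij by (auto simp: bij_betw_def)
  have enX: "en i \<in> X2" for i using enA A2_sub unfolding A2_def by blast
  have eninj: "en i = en j \<Longrightarrow> i = j" for i j using bij by (auto simp: bij_betw_def dest: injD)
  have p1: "\<And>i j. (en i, en j) \<in> r2 \<or> (en j, en i) \<in> r2" using chain_total[OF d2 enX enX] .
  have p2: "\<And>i j. (en i, en j) \<in> r2 \<Longrightarrow> (en j, en i) \<in> r2 \<Longrightarrow> i = j"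
    using chain_antisym[OF d2] eninj by blast
  have p3: "\<And>i j k. (en i, en j) \<in> r2 \<Longrightarrow> (en j, en k) \<in> r2 \<Longrightarrow> (en i, en k) \<in> r2"
    using chain_trans[OF d2] by blast
  have p4: "\<And>a b c :: rat. a < b \<Longrightarrow> b < c \<Longrightarrow> a < c" by simp
  have p5: "\<And>a :: rat. \<not> a < a" by simp
  have p6: "\<And>a b :: rat. a \<in> (\<lambda>x. x) ` UNIV \<Longrightarrow> b \<in> (\<lambda>x. x) ` UNIV \<Longrightarrow> a \<noteq> b \<Longrightarrow> a < b \<or> b < a" by auto
  have p7: "(0::rat) \<in> UNIV" "(1::rat) \<in> UNIV" "(0::rat) < 1" by simp_all
  have p8: "\<And>(a::rat) b N. a \<in> UNIV \<Longrightarrow> b \<in> UNIV \<Longrightarrow> a < b \<Longrightarrow>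
        \<exists>c\<in>UNIV. a < c \<and> c < b \<and> (False \<longrightarrow> N < (0::nat))" using dense by blast
  interpret fs: forth_setup "\<lambda>i j. (en i, en j) \<in> r2" "(<) :: rat \<Rightarrow> rat \<Rightarrow> bool" "\<lambda>x. x" UNIV "\<lambda>_. 0" False 0 1
    apply (rule forth_setup.intro)
    apply (rule p1)
    apply (erule (1) p2)
    apply (erule (1) p3)
    apply (erule (1) p4)
    apply (rule p5)
    apply (rule p6; assumption)
    apply (rule p7(1))
    apply (rule p7(2))
    apply (rule p7(3))
    apply (rule p8; assumption)
    done
  obtain \<rho> :: "nat \<Rightarrow> rat" where r: "\<forall>i. 0 < \<rho> i \<and> \<rho> i < 1" "\<forall>i j. (en i, en j) \<in> r2 \<longrightarrow> i \<noteq> j \<longrightarrow> \<rho> i < \<rho> j"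
    using fs.forth_result by blast
  define R where "R c = hq (\<rho> (inv en c))" for c
  have eninv: "c \<in> A2 \<Longrightarrow> en (inv en c) = c" for c using bij by (simp add: bij_betw_inv_into_right)
  have ord: "(c,c') \<in> r2 \<longleftrightarrow> le2 (R c) (R c')" if c: "c \<in> A2" and c': "c' \<in> A2" for c c'
  proof (cases "inv en c = inv en c'")
    case True
    hence "c = c'" using eninv c c' by metis
    thus ?thesis using chain_refl[OF d2] c A2_sub le2_refl unfolding A2_def by auto
  next
    case False
    show ?thesis
    proof
      assume "(c,c') \<in> r2"
      hence "\<rho> (inv en c) < \<rho> (inv en c')" using r(2) False eninv c c' by metis
      thus "le2 (R c) (R c')" unfolding R_def using hq_ord[of "\<rho> (inv en c)" "\<rho> (inv en c')"] by simp
    next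
      assume a: "le2 (R c) (R c')"
      show "(c,c') \<in> r2"
      proof (rule ccontr)
        assume "(c,c') \<notin> r2"
        hence "(c',c) \<in> r2" using chain_total[OF d2] c c' A2_sub unfolding A2_def by blast
        hence "\<rho> (inv en c') < \<rho> (inv en c)" using r(2) False eninv c c' by metis
        moreover have "\<rho> (inv en c) \<le> \<rho> (inv en c')" using a hq_ord[of "\<rho> (inv en c)" "\<rho> (inv en c')"] unfolding R_def by simp
        ultimately show False by simp
      qed
    qed
  qed
  have inj: "inj_on R A2"
  proof (rule inj_onI)
    fix c c' assume c: "c \<in> A2" and c': "c' \<in> A2" and e: "R c = R c'"
    hence "(c,c') \<in> r2" "(c',c) \<in> r2" using ord le2_refl by auto
    thus "c = c'" using chain_antisym[OF d2] by blast
  qed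
  have pos: "le2 (hq q) (R c)" if "q \<le> 0" for q c
  proof -
    have "0 < \<rho> (inv en c)" using r(1) by blast
    hence "q \<le> \<rho> (inv en c)" using that by simp
    thus ?thesis unfolding R_def using hq_ord[of q "\<rho> (inv en c)"] by simp
  qed
  show ?thesis using ord inj pos unfolding A2_def by blast
qed


definition Bs :: "nat \<Rightarrow> 'c set" where "Bs n = (\<Union>m\<in>{..n}. Fb m)"

lemma Bs_finite: "finite (Bs n)" unfolding Bs_def using Fb_finite by auto

definition Mx :: "('c \<Rightarrow> nat) \<Rightarrow> nat \<Rightarrow> nat" where "Mx R n = Max (insert 0 (R ` Bs n))"

lemma Mx_ge: "c \<in> Bs n \<Longrightarrow> R c \<le> Mx R n"
  unfolding Mx_def using Bs_finite by auto

definition pickZ :: "nat \<Rightarrow> nat" where "pickZ N = (SOME y. y \<in> hq ` {q. q < 0} \<and> N < y)"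

lemma pickZ: "pickZ N \<in> hq ` {q. q < 0} \<and> N < pickZ N"
proof -
  have sub: "{-1<..<0::rat} \<subseteq> {q. q < 0}" by auto
  have inf0: "infinite {-1<..<0::rat}" by simp
  have inf1: "infinite {q::rat. q < 0}"
  proof
    assume "finite {q::rat. q < 0}"
    hence "finite {-1<..<0::rat}" using sub by (rule finite_subset[rotated])
    thus False using inf0 by simp
  qed
  have ij: "inj_on hq {q. q < 0}" by (rule inj_on_subset[OF hq_inj subset_UNIV])
  have inf2: "infinite (hq ` {q. q < 0})"
  proof
    assume "finite (hq ` {q. q < 0})"
    hence "finite {q::rat. q < 0}" using ij by (rule finite_imageD)
    thus False using inf1 by simp
  qed
  have "\<forall>m. \<exists>n>m. n \<in> hq ` {q. q < 0}" using infinite_nat_iff_unbounded[THEN iffD1, OF inf2] .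
  then obtain y where "y > N" "y \<in> hq ` {q. q < 0}" by blast
  hence "\<exists>y. y \<in> hq ` {q. q < 0} \<and> N < y" by blast
  thus ?thesis unfolding pickZ_def by (rule someI_ex)
qed

primrec Zs :: "('c \<Rightarrow> nat) \<Rightarrow> nat \<Rightarrow> nat" where
  "Zs R 0 = pickZ (Mx R 0)"
| "Zs R (Suc n) = pickZ (max (Mx R (Suc n)) (Zs R n))"

lemma Zs_props: "Zs R n \<in> hq ` {q. q < 0}" "Mx R n < Zs R n"
proof -
  have "Zs R n \<in> hq ` {q. q < 0} \<and> Mx R n < Zs R n"
  proof (cases n)
    case 0 thus ?thesis using pickZ[of "Mx R 0"] by simp
  next
    case (Suc m) thus ?thesis using pickZ[of "max (Mx R (Suc m)) (Zs R m)"] by simp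
  qed
  thus "Zs R n \<in> hq ` {q. q < 0}" "Mx R n < Zs R n" by auto
qed

lemma Zs_smono: "strict_mono (Zs R)"
  unfolding strict_mono_Suc_iff
proof
  fix n show "Zs R n < Zs R (Suc n)" using pickZ[of "max (Mx R (Suc n)) (Zs R n)"] by simp
qed

lemma Zs_max: "Zs R (max m n) = max (Zs R m) (Zs R n)"
  using strict_mono_less_eq[OF Zs_smono, of R m n] by (auto simp: max_def)

lemma dir2a:
  assumes Rord: "\<forall>c\<in>snd ` T. \<forall>c'\<in>snd ` T. (c,c') \<in> r2 \<longleftrightarrow> le2 (R c) (R c')"
    and Rinj: "inj_on R (snd ` T)" and Rpos: "\<forall>c\<in>snd ` T. \<forall>q\<le>0. le2 (hq q) (R c)"
  shows "\<exists>\<Phi>. join_embedding T (restr (prod_order r1 r2) T) TK (restr (prod_order LE1 L2) TK) \<Phi>"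
proof -
  define \<Phi> where "\<Phi> t = (Suc (Zs R (inv \<gamma> (fst t))), Suc (R (snd t)))" for t
  have \<gamma>inj: "inj \<gamma>" using \<gamma>bij by (simp add: bij_betw_def)
  have Tform: "\<And>t. t \<in> T \<Longrightarrow> \<exists>n c. t = (\<gamma> n, c) \<and> c \<in> Fb n \<and> c \<in> snd ` T"
  proof -
    fix t assume t: "t \<in> T"
    obtain x c where xc: "t = (x,c)" by (cases t)
    have "\<gamma> (inv \<gamma> x) = x" using \<gamma>_surj[OF t] xc by simp
    hence "t = (\<gamma> (inv \<gamma> x), c)" using xc by simp
    moreover have "c \<in> Fb (inv \<gamma> x)" unfolding Fb_def using t calculation by simp
    moreover have "c \<in> snd ` T" using t xc by force
    ultimately show "\<exists>n c. t = (\<gamma> n, c) \<and> c \<in> Fb n \<and> c \<in> snd ` T" by blast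
  qed
  have Phi_g: "\<Phi> (\<gamma> n, c) = (Suc (Zs R n), Suc (R c))" for n c
    unfolding \<Phi>_def using \<gamma>inj by (simp add: inv_f_f)
  have im: "\<Phi> ` T \<subseteq> TK"
  proof
    fix u assume "u \<in> \<Phi> ` T"
    then obtain t where t: "t \<in> T" "u = \<Phi> t" by blast
    then obtain n c where nc: "t = (\<gamma> n, c)" "c \<in> Fb n" "c \<in> snd ` T" using Tform by blast
    have "c \<in> Bs n" unfolding Bs_def using nc by blast
    hence lt1: "R c < Zs R n" using Mx_ge[of c n R] Zs_props(2)[of R n] by simp
    obtain q where q: "q < 0" "Zs R n = hq q" using Zs_props(1)[of R n] by blast
    have "le2 (hq q) (R c)" using Rpos nc(3) q(1) by (meson less_imp_le)
    hence lt2: "le2 (Zs R n) (R c)" using q by simp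
    have "R c \<le> Zs R n" using lt1 by simp
    note lt1 lt2 this
    thus "u \<in> TK" unfolding t(2) nc Phi_g TK_def by auto
  qed
  have inj: "inj_on \<Phi> T"
  proof (rule inj_onI)
    fix t t' assume t: "t \<in> T" and t': "t' \<in> T" and e: "\<Phi> t = \<Phi> t'"
    obtain n c where nc: "t = (\<gamma> n, c)" "c \<in> snd ` T" using Tform[OF t] by blast
    obtain n' c' where nc': "t' = (\<gamma> n', c')" "c' \<in> snd ` T" using Tform[OF t'] by blast
    have "Zs R n = Zs R n'" "R c = R c'" using e unfolding nc nc' Phi_g by auto
    hence "n = n'" "c = c'" using strict_mono_eq[OF Zs_smono] inj_onD[OF Rinj] nc nc' by auto
    thus "t = t'" using nc nc' by simp
  qed
  have hom: "\<Phi> (pj r1 r2 t t') = pj LE1 L2 (\<Phi> t) (\<Phi> t')" if t: "t \<in> T" and t': "t' \<in> T" for t t'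
  proof -
    obtain n c where nc: "t = (\<gamma> n, c)" "c \<in> snd ` T" using Tform[OF t] by blast
    obtain n' c' where nc': "t' = (\<gamma> n', c')" "c' \<in> snd ` T" using Tform[OF t'] by blast
    have "(c,c') \<in> r2 \<longleftrightarrow> le2 (R c) (R c')" using Rord nc(2) nc'(2) by blast
    hence "R (mx r2 c c') = (if le2 (R c) (R c') then R c' else R c)"
      unfolding mx_def by simp
    thus ?thesis unfolding nc nc' pj_T Phi_g
      by (simp add: pj_def mx_LE1 mx_L2_S Zs_max)
  qed
  have "join_embedding T (restr (prod_order r1 r2) T) TK (restr (prod_order LE1 L2) TK) \<Phi>"
  proof (rule jemb_closed[OF d1 d2 TX jcT chain_LE1 chain_L2 _ jclosed_TK im inj hom])
    show "TK \<subseteq> UNIV \<times> UNIV" by simp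
  qed
  thus ?thesis by blast
qed

end


context both
begin

lemma Tform2: "t \<in> T \<Longrightarrow> \<exists>n c. t = (\<gamma> n, c) \<and> c \<in> Fb n"
proof -
  assume t: "t \<in> T"
  obtain x c where xc: "t = (x,c)" by (cases t)
  have "\<gamma> (inv \<gamma> x) = x" using \<gamma>_surj[OF t] xc by simp
  hence "t = (\<gamma> (inv \<gamma> x), c)" using xc by simp
  moreover have "c \<in> Fb (inv \<gamma> x)" unfolding Fb_def using t calculation by simp
  ultimately show ?thesis by blast
qed

lemma snd_T_witness: "c \<in> snd ` T \<Longrightarrow> \<exists>n. (\<gamma> n, c) \<in> T"
proof -
  assume "c \<in> snd ` T"
  then obtain t where t: "t \<in> T" "c = snd t" by blast
  then obtain n c' where "t = (\<gamma> n, c')" using Tform2 by blast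
  thus ?thesis using t by auto
qed

lemma hA_X: "hA p \<in> X2" using hA A2_sub by blast

lemma hA_lt: "p < q \<Longrightarrow> (hA p, hA q) \<in> r2 \<and> hA p \<noteq> hA q"
  using hAord hA_inj by (metis inj_eq less_imp_le order_less_irrefl)

definition ltc :: "'c \<Rightarrow> 'c \<Rightarrow> bool" where "ltc a b \<longleftrightarrow> (a,b) \<in> r2 \<and> a \<noteq> b"

lemma ltc_trans: "ltc a b \<Longrightarrow> ltc b c \<Longrightarrow> ltc a c"
  unfolding ltc_def using chain_trans[OF d2] chain_antisym[OF d2] by blast

lemma dir2b: "\<exists>\<Psi>. join_embedding TK (restr (prod_order LE1 L2) TK) T (restr (prod_order r1 r2) T) \<Psi>"
proof -
  define E where "E = {(n,c). (\<gamma> n, c) \<in> T \<and> c \<in> range hA}"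
  obtain n0 where n0: "(\<gamma> n0, hA 0) \<in> T" using snd_T_witness[OF hA] by blast
  obtain n1 where n1: "(\<gamma> n1, hA 1) \<in> T" using snd_T_witness[OF hA] by blast
  have p1: "\<And>i j. le2 i j \<or> le2 j i" by (rule le2_total)
  have p2: "\<And>i j. le2 i j \<Longrightarrow> le2 j i \<Longrightarrow> i = j" by (rule le2_antisym)
  have p3: "\<And>i j k. le2 i j \<Longrightarrow> le2 j k \<Longrightarrow> le2 i k" by (rule le2_trans)
  have p4: "\<And>a b c. ltc a b \<Longrightarrow> ltc b c \<Longrightarrow> ltc a c" by (rule ltc_trans)
  have p5: "\<And>a. \<not> ltc a a" unfolding ltc_def by simp
  have p6: "\<And>a b. a \<in> snd ` E \<Longrightarrow> b \<in> snd ` E \<Longrightarrow> a \<noteq> b \<Longrightarrow> ltc a b \<or> ltc b a"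
  proof -
    fix a b assume "a \<in> snd ` E" "b \<in> snd ` E" "a \<noteq> b"
    moreover hence "a \<in> X2" "b \<in> X2" unfolding E_def using A2_sub by force+
    ultimately show "ltc a b \<or> ltc b a" unfolding ltc_def using chain_total[OF d2] by blast
  qed
  have p7: "(n0, hA 0) \<in> E" "(n1, hA 1) \<in> E" "ltc (snd (n0, hA 0)) (snd (n1, hA 1))"
    unfolding E_def ltc_def using n0 n1 hA_lt[of 0 1] by auto
  have p8: "\<And>a b N. a \<in> E \<Longrightarrow> b \<in> E \<Longrightarrow> ltc (snd a) (snd b) \<Longrightarrow>
      \<exists>c\<in>E. ltc (snd a) (snd c) \<and> ltc (snd c) (snd b) \<and> (True \<longrightarrow> N < fst c)"
  proof -
    fix a b N assume a: "a \<in> E" and b: "b \<in> E" and ab: "ltc (snd a) (snd b)"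
    obtain p where p: "snd a = hA p" using a unfolding E_def by auto
    obtain p' where p': "snd b = hA p'" using b unfolding E_def by auto
    have pp: "p < p'"
    proof (rule ccontr)
      assume "\<not> p < p'"
      hence "p' \<le> p" by simp
      hence "(hA p', hA p) \<in> r2" using hAord by blast
      thus False using ab p p' chain_antisym[OF d2] unfolding ltc_def by metis
    qed
    have "\<exists>r. p < r \<and> r < p' \<and> (\<exists>m>N. (\<gamma> m, hA r) \<in> T)"
    proof (rule ccontr)
      assume na: "\<not> (\<exists>r. p < r \<and> r < p' \<and> (\<exists>m>N. (\<gamma> m, hA r) \<in> T))"
      have "hA ` {p<..<p'} \<subseteq> Bs N"
      proof
        fix c assume "c \<in> hA ` {p<..<p'}"
        then obtain r where r: "p < r" "r < p'" "c = hA r" by auto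
        obtain m where m: "(\<gamma> m, hA r) \<in> T" using snd_T_witness[OF hA] by blast
        hence "m \<le> N" using na r by (meson not_less)
        thus "c \<in> Bs N" unfolding Bs_def Fb_def using m r by auto
      qed
      moreover have "infinite (hA ` {p<..<p'})"
      proof
        assume "finite (hA ` {p<..<p'})"
        hence "finite {p<..<p'}" using inj_on_subset[OF hA_inj subset_UNIV] by (rule finite_imageD)
        thus False using pp infinite_Ioo by blast
      qed
      ultimately show False using Bs_finite finite_subset by blast
    qed
    then obtain r m where r: "p < r" "r < p'" "N < m" "(\<gamma> m, hA r) \<in> T" by blast
    have "(m, hA r) \<in> E" unfolding E_def using r by auto
    moreover have "ltc (snd a) (hA r)" "ltc (hA r) (snd b)"
      unfolding ltc_def p p' using hA_lt r by auto
    ultimately show "\<exists>c\<in>E. ltc (snd a) (snd c) \<and> ltc (snd c) (snd b) \<and> (True \<longrightarrow> N < fst c)"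
      using r(3) by (intro bexI[of _ "(m, hA r)"]) auto
  qed
  interpret fs: forth_setup le2 ltc snd E fst True "(n0, hA 0)" "(n1, hA 1)"
    apply (rule forth_setup.intro)
    apply (rule p1)
    apply (erule (1) p2)
    apply (erule (1) p3)
    apply (erule (1) p4)
    apply (rule p5)
    apply (erule (2) p6)
    apply (rule p7(1))
    apply (rule p7(2))
    apply (rule p7(3))
    apply (erule (2) p8)
    done
  obtain \<rho> :: "nat \<Rightarrow> nat \<times> 'c" where r: "\<forall>i. \<rho> i \<in> E \<and> ltc (hA 0) (snd (\<rho> i))"
    "\<forall>i j. le2 i j \<longrightarrow> i \<noteq> j \<longrightarrow> ltc (snd (\<rho> i)) (snd (\<rho> j))"
    "n0 < fst (\<rho> 0)" "\<forall>i. fst (\<rho> i) < fst (\<rho> (Suc i))"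
    using fs.forth_result by auto
  define nn where "nn i = fst (\<rho> i)" for i
  define cc where "cc i = snd (\<rho> i)" for i
  have inT: "(\<gamma> (nn i), cc i) \<in> T" for i
  proof -
    have "\<rho> i \<in> E" using r(1) by blast
    thus ?thesis unfolding E_def nn_def cc_def by (cases "\<rho> i") auto
  qed
  have nsm: "strict_mono nn" unfolding strict_mono_Suc_iff nn_def using r(4) by blast
  have n0lt: "n0 < nn i" for i
  proof -
    have "nn 0 \<le> nn i" using strict_mono_less_eq[OF nsm] by simp
    thus ?thesis using r(3) unfolding nn_def by simp
  qed
  have ccX: "cc i \<in> X2" for i using inT TX by blast
  have cc_le: "(cc i, cc j) \<in> r2" if "le2 i j" for i j
  proof (cases "i = j")
    case True thus ?thesis using chain_refl[OF d2 ccX] by simp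
  next
    case False thus ?thesis using r(2) that unfolding ltc_def cc_def by blast
  qed
  have cc_nle: "(cc i, cc j) \<notin> r2" if "\<not> le2 i j" for i j
  proof
    assume a: "(cc i, cc j) \<in> r2"
    have "le2 j i" "i \<noteq> j" using that le2_total le2_refl by auto
    hence "ltc (cc j) (cc i)" using r(2) unfolding cc_def by blast
    thus False using a chain_antisym[OF d2] unfolding ltc_def by blast
  qed
  have cc_inj: "i = j" if e: "cc i = cc j" for i j
  proof (rule ccontr)
    assume ne: "i \<noteq> j"
    have "le2 i j \<or> le2 j i" by (rule le2_total)
    hence "ltc (cc i) (cc j) \<or> ltc (cc j) (cc i)" using r(2) ne unfolding cc_def by metis
    thus False using e unfolding ltc_def by simp
  qed
  have clo1: "(hA 0, cc i) \<in> r2" "hA 0 \<noteq> cc i" for i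
    using r(1) unfolding ltc_def cc_def by auto
  have clo: "(hA 0, cc i) \<in> r2" "(cc i, hA 0) \<notin> r2" for i
  proof -
    show "(hA 0, cc i) \<in> r2" using clo1 by simp
    show "(cc i, hA 0) \<notin> r2"
    proof
      assume "(cc i, hA 0) \<in> r2"
      hence "cc i = hA 0" using clo1(1)[of i] chain_antisym[OF d2] by blast
      thus False using clo1(2)[of i] by simp
    qed
  qed
  define t0 where "t0 = (\<gamma> n0, hA 0)"
  define \<Psi> where "\<Psi> u = (if u = (0,0) then t0 else (\<gamma> (nn (fst u - 1)), cc (snd u - 1)))" for u
  have Psi0: "\<Psi> (0,0) = t0" unfolding \<Psi>_def by simp
  have PsiS: "\<Psi> (Suc i, Suc j) = (\<gamma> (nn i), cc j)" for i j unfolding \<Psi>_def by simp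
  have nnmax: "nn (max i j) = max (nn i) (nn j)" for i j
  proof (cases "i \<le> j")
    case True
    hence "nn i \<le> nn j" using strict_mono_less_eq[OF nsm] by blast
    thus ?thesis using True by (simp add: max_def)
  next
    case False
    hence "\<not> nn i \<le> nn j" using strict_mono_less_eq[OF nsm] by blast
    thus ?thesis using False by (simp add: max_def)
  qed
  have mxcc: "mx r2 (cc j) (cc j') = cc (if le2 j j' then j' else j)" for j j'
  proof (cases "le2 j j'")
    case True thus ?thesis unfolding mx_def using cc_le[OF True] by simp
  next
    case False thus ?thesis unfolding mx_def using cc_nle[OF False] by simp
  qed
  have im: "\<Psi> ` TK \<subseteq> T"
  proof
    fix t assume "t \<in> \<Psi> ` TK"
    then obtain u where u: "u \<in> TK" "t = \<Psi> u" by blast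
    show "t \<in> T"
    proof (cases "u = (0,0)")
      case True thus ?thesis using u n0 Psi0 unfolding t0_def by simp
    next
      case False
      then obtain i j where ij: "u = (Suc i, Suc j)" "j \<le> i" "le2 i j" using u TK_cases by blast
      have "pj r1 r2 (\<gamma> (nn i), cc i) (\<gamma> (nn j), cc j) \<in> T" using jcT inT unfolding jclosed_def by blast
      moreover have "max (nn i) (nn j) = nn i" using nnmax[of i j] ij by (simp add: max_def)
      moreover have "mx r2 (cc i) (cc j) = cc j" using mx_eq2[OF cc_le[OF ij(3)]] .
      ultimately show ?thesis using u(2) ij(1) PsiS by (simp add: pj_T)
    qed
  qed
  have inj: "inj_on \<Psi> TK"
  proof (rule inj_onI)
    fix u v assume u: "u \<in> TK" and v: "v \<in> TK" and e: "\<Psi> u = \<Psi> v"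
    show "u = v"
    proof (cases "u = (0,0)")
      case True
      show ?thesis
      proof (cases "v = (0,0)")
        case True thus ?thesis using \<open>u = (0,0)\<close> by simp
      next
        case False
        then obtain i j where "v = (Suc i, Suc j)" using v TK_cases by blast
        hence "\<gamma> n0 = \<gamma> (nn i)" using e \<open>u = (0,0)\<close> Psi0 PsiS unfolding t0_def by simp
        hence "n0 = nn i" by (rule \<gamma>_inj)
        thus ?thesis using n0lt[of i] by simp
      qed
    next
      case False
      then obtain i j where ij: "u = (Suc i, Suc j)" using u TK_cases by blast
      show ?thesis
      proof (cases "v = (0,0)")
        case True
        hence "\<gamma> n0 = \<gamma> (nn i)" using e ij Psi0 PsiS unfolding t0_def by simp
        hence "n0 = nn i" by (rule \<gamma>_inj)
        thus ?thesis using n0lt[of i] by simp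
      next
        case False
        then obtain i' j' where ij': "v = (Suc i', Suc j')" using v TK_cases by blast
        have "\<gamma> (nn i) = \<gamma> (nn i')" "cc j = cc j'" using e ij ij' PsiS by auto
        hence "nn i = nn i'" "j = j'" using \<gamma>_inj cc_inj by blast+
        hence "i = i'" "j = j'" using strict_mono_eq[OF nsm] by auto
        thus ?thesis using ij ij' by simp
      qed
    qed
  qed
  have mxr: "mx r2 (hA 0) (cc j) = cc j" "mx r2 (cc j) (hA 0) = cc j" for j
    unfolding mx_def using clo by auto
  have hom: "\<Psi> (pj LE1 L2 u v) = pj r1 r2 (\<Psi> u) (\<Psi> v)" if u: "u \<in> TK" and v: "v \<in> TK" for u v
  proof (cases "u = (0,0)")
    case True
    show ?thesis
    proof (cases "v = (0,0)")
      case True thus ?thesis using \<open>u = (0,0)\<close>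
        by (simp add: pj_def mx_LE1 mx_L2_0 Psi0 t0_def mx_def)
    next
      case False
      then obtain i j where ij: "v = (Suc i, Suc j)" using v TK_cases by blast
      have "max n0 (nn i) = nn i" using n0lt[of i] by simp
      thus ?thesis using \<open>u = (0,0)\<close> ij
        by (simp add: pj_def mx_LE1 mx_L2_0 Psi0 PsiS t0_def mx_\<gamma> mxr)
    qed
  next
    case False
    then obtain i j where ij: "u = (Suc i, Suc j)" using u TK_cases by blast
    show ?thesis
    proof (cases "v = (0,0)")
      case True
      have "max (nn i) n0 = nn i" using n0lt[of i] by simp
      thus ?thesis using True ij
        by (simp add: pj_def mx_LE1 mx_L2_0 Psi0 PsiS t0_def mx_\<gamma> mxr)
    next
      case False
      then obtain i' j' where ij': "v = (Suc i', Suc j')" using v TK_cases by blast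
      show ?thesis using ij ij'
        by (simp add: pj_def mx_LE1 mx_L2_S PsiS mx_\<gamma> nnmax mxcc)
    qed
  qed
  have "join_embedding TK (restr (prod_order LE1 L2) TK) T (restr (prod_order r1 r2) T) \<Psi>"
  proof (rule jemb_closed[OF chain_LE1 chain_L2 _ jclosed_TK d1 d2 TX jcT im inj hom])
    show "TK \<subseteq> UNIV \<times> UNIV" by simp
  qed
  thus ?thesis by blast
qed

end


theorem proposition8p2:
  fixes S :: "'a set" and s :: "('a \<times> 'a) set"
    and S' :: "'d set" and s' :: "('d \<times> 'd) set"
    and X :: "'x set" and q1 q2 :: "('x \<times> 'x) set"
    and X1 :: "'b set" and r1 :: "('b \<times> 'b) set"
    and X2 :: "'c set" and r2 :: "('c \<times> 'c) set"
    and f :: "'a \<Rightarrow> 'b \<times> 'c"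
  assumes "LD_witness S' s' X q1 q2"
    and "join_semilattice S s"
  shows "(equimorphic S s S' s' \<longrightarrow>
            (\<exists>(Y1::rat set) t1 (Y2::rat set) t2 g. chain_product_rep S s Y1 t1 Y2 t2 g))
       \<and> (chain_product_rep S s X1 r1 X2 r2 f \<longrightarrow> equimorphic S s S' s')"
proof -
  note LD = assms(1) and Ssl = assms(2)
  have q1: "chain_on X q1" and q2: "chain_on X q2"
    using LD unfolding LD_witness_def bichain_def by auto
  obtain g :: "nat \<Rightarrow> 'x" where g: "bij_betw g UNIV X" "\<forall>m n. (g m, g n) \<in> q1 \<longleftrightarrow> m \<le> n"
    using LD unfolding LD_witness_def order_type_omega_def by blast
  obtain h :: "rat \<Rightarrow> 'x" where h: "range h \<subseteq> X" "\<forall>p q. p \<le> q \<longleftrightarrow> (h p, h q) \<in> q2"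
    using LD unfolding LD_witness_def order_scattered_def by blast
  have isoK: "order_isomorphic S' s' (compacts X q1 q2) (compacts_order X q1 q2)"
    using LD unfolding LD_witness_def by blast
  have gord: "\<And>m n. (g m, g n) \<in> q1 \<longleftrightarrow> m \<le> n" using g(2) by blast
  have hX: "\<And>p. h p \<in> X" using h(1) by blast
  have hord: "\<And>p q. p \<le> q \<longleftrightarrow> (h p, h q) \<in> q2" using h(2) by blast
  interpret bq: bichQ X q1 q2 g h
    apply (rule bichQ.intro)
     apply (rule bich.intro[OF q1 q2 g(1)])
     apply (rule gord)
    apply (rule bichQ_axioms.intro)
     apply (rule hX)
    apply (rule hord)
    done
  let ?TR = "restr (prod_order LE1 bq.L2) bq.TK"
  obtain a1 where a1: "join_embedding bq.TK ?TR (compacts X q1 q2) (compacts_order X q1 q2) a1"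
    using iso_jemb2(1)[OF bq.TK_iso] by blast
  obtain a2 where a2: "join_embedding (compacts X q1 q2) (compacts_order X q1 q2) bq.TK ?TR a2"
    using iso_jemb2(2)[OF bq.TK_iso] by blast
  obtain b1 where b1: "join_embedding S' s' (compacts X q1 q2) (compacts_order X q1 q2) b1"
    using iso_jemb2(1)[OF isoK] by blast
  obtain b2 where b2: "join_embedding (compacts X q1 q2) (compacts_order X q1 q2) S' s' b2"
    using iso_jemb2(2)[OF isoK] by blast
  have TK_S': "join_embedding bq.TK ?TR S' s' (b2 \<circ> a1)" by (rule jemb_comp[OF a1 b2])
  have S'_TK: "join_embedding S' s' bq.TK ?TR (a2 \<circ> b1)" by (rule jemb_comp[OF b1 a2])
  have part1: "equimorphic S s S' s' \<longrightarrow>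
            (\<exists>(Y1::rat set) t1 (Y2::rat set) t2 g. chain_product_rep S s Y1 t1 Y2 t2 g)"
  proof
    assume "equimorphic S s S' s'"
    then obtain e0 k0 where e0: "join_embedding S s S' s' e0" and k0: "join_embedding S' s' S s k0"
      unfolding equimorphic_def by blast
    have e: "join_embedding S s bq.TK ?TR ((a2 \<circ> b1) \<circ> e0)" by (rule jemb_comp[OF e0 S'_TK])
    have k: "join_embedding bq.TK ?TR S s (k0 \<circ> (b2 \<circ> a1))" by (rule jemb_comp[OF TK_S' k0])
    have rep: "chain_product_rep S s UNIV LE1 UNIV bq.L2 ((a2 \<circ> b1) \<circ> e0)"
      by (rule bq.dir1[OF e k])
    have io: "inj (of_nat :: nat \<Rightarrow> rat)" by (rule inj_of_nat)
    show "\<exists>(Y1::rat set) t1 (Y2::rat set) t2 g. chain_product_rep S s Y1 t1 Y2 t2 g"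
      using transfer_rep[OF rep io io] by blast
  qed
  have part2: "chain_product_rep S s X1 r1 X2 r2 f \<longrightarrow> equimorphic S s S' s'"
  proof
    assume rep: "chain_product_rep S s X1 r1 X2 r2 f"
    define T where "T = f ` S"
    have d1: "chain_on X1 r1" and d2: "chain_on X2 r2"
      and jf: "join_embedding S s (X1 \<times> X2) (prod_order r1 r2) f"
      using rep unfolding chain_product_rep_def by auto
    have ot: "order_type_omega (fst ` T) (restr r1 (fst ` T))"
      and ns: "\<not> order_scattered (snd ` T) (restr r2 (snd ` T))"
      and fib: "\<And>x. x \<in> fst ` T \<Longrightarrow> finite (({x} \<times> snd ` T) \<inter> T)"
      using rep unfolding chain_product_rep_def T_def Let_def by auto
    have TX: "T \<subseteq> X1 \<times> X2" and jcT: "jclosed r1 r2 T"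
      and fT: "join_embedding S s T (restr (prod_order r1 r2) T) f"
      and fTi: "join_embedding T (restr (prod_order r1 r2) T) S s (inv_into S f)"
      using sl_rep[OF Ssl d1 d2 jf] unfolding T_def by auto
    obtain \<gamma> :: "nat \<Rightarrow> 'b" where \<gamma>: "bij_betw \<gamma> UNIV (fst ` T)"
      "\<forall>m n. (\<gamma> m, \<gamma> n) \<in> restr r1 (fst ` T) \<longleftrightarrow> m \<le> n"
      using ot unfolding order_type_omega_def by blast
    have \<gamma>ord: "\<And>m n. (\<gamma> m, \<gamma> n) \<in> r1 \<longleftrightarrow> m \<le> n"
    proof -
      fix m n
      have "\<gamma> m \<in> fst ` T" "\<gamma> n \<in> fst ` T" using \<gamma>(1) by (auto simp: bij_betw_def)
      thus "(\<gamma> m, \<gamma> n) \<in> r1 \<longleftrightarrow> m \<le> n" using \<gamma>(2) unfolding restr_def by auto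
    qed
    obtain hA :: "rat \<Rightarrow> 'c" where hA: "range hA \<subseteq> snd ` T"
      "\<forall>p q. p \<le> q \<longleftrightarrow> (hA p, hA q) \<in> restr r2 (snd ` T)"
      using ns unfolding order_scattered_def by blast
    have hAin: "\<And>p. hA p \<in> snd ` T" using hA(1) by blast
    have hAord: "\<And>p q. p \<le> q \<longleftrightarrow> (hA p, hA q) \<in> r2"
      using hA(2) hAin unfolding restr_def by auto
    interpret B: both X q1 q2 g h X1 r1 X2 r2 T \<gamma> hA
      apply (rule both.intro)
       apply (rule bq.bichQ_axioms)
      apply (rule trep.intro)
              apply (rule d1)
             apply (rule d2)
            apply (rule TX)
           apply (rule jcT)
          apply (rule \<gamma>(1))
         apply (rule \<gamma>ord)
        apply (erule fib)
       apply (rule hAin)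
      apply (rule hAord)
      done
    obtain R where R: "\<forall>c\<in>snd ` T. \<forall>c'\<in>snd ` T. (c,c') \<in> r2 \<longleftrightarrow> bq.le2 (R c) (R c')"
      "inj_on R (snd ` T)" "\<forall>c\<in>snd ` T. \<forall>q\<le>0. bq.le2 (bq.hq q) (R c)"
      using B.rat_dense_setup by blast
    obtain \<Phi> where \<Phi>: "join_embedding T (restr (prod_order r1 r2) T) bq.TK ?TR \<Phi>"
      using B.dir2a[OF R] by blast
    obtain \<Psi> where \<Psi>: "join_embedding bq.TK ?TR T (restr (prod_order r1 r2) T) \<Psi>"
      using B.dir2b by blast
    have "join_embedding S s S' s' ((b2 \<circ> a1) \<circ> (\<Phi> \<circ> f))"
      by (rule jemb_comp[OF jemb_comp[OF fT \<Phi>] TK_S'])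
    moreover have "join_embedding S' s' S s ((inv_into S f \<circ> \<Psi>) \<circ> (a2 \<circ> b1))"
      by (rule jemb_comp[OF S'_TK jemb_comp[OF \<Psi> fTi]])
    ultimately show "equimorphic S s S' s'" unfolding equimorphic_def by blast
  qed
  show ?thesis using part1 part2 by blast
qed

end
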